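(* Let $(M,g)$ be a time-oriented Lorentzian manifold (without boundary) and $x\in M$. If there exists $y\in\downarrow I^+(x)$ with $y\notin I^-(x)$, then there exists $z\in\downarrow I^+(x)$ with $z\notin\overline{I^-(x)}$. Dually, if $\uparrow I^-(x)\setminus I^+(x)\ne\emptyset$, then there exists $z\in\uparrow I^-(x)$ with $z\notin\overline{I^+(x)}$.
   Context: $a\ll b$ means there is a future directed $C^1$ timelike curve from $a$ to $b$; $I^+(x)=\{b:x\ll b\}$, $I^-(x)=\{b:b\ll x\}$. For an open set $U$, $\downarrow U=\mathrm{Int}\{c:c\ll u\ \forall u\in U\}$ and $\uparrow U=\mathrm{Int}\{c:u\ll c\ \forall u\in U\}$. Overline denotes topological closure in $M$. *)

theory Defs
  imports "HOL-Analysis.Analysis"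
begin

text \<open>A chart is a pair (U, phi) with U an open subset of the manifold and phi a
  homeomorphism of U onto an open subset of R^n (n = CARD('n)).
  The manifold itself is the whole carrier type 'm.\<close>

type_synonym ('m, 'n) chart = "'m set \<times> ('m \<Rightarrow> real^'n)"

fun Ck :: "nat \<Rightarrow> (real^'n) set \<Rightarrow> (real^'n \<Rightarrow> 'b::real_normed_vector) \<Rightarrow> bool" where
  "Ck 0 S f = continuous_on S f"
| "Ck (Suc k) S f = (f differentiable_on S \<and>
      (\<forall>i. Ck k S (\<lambda>x. frechet_derivative f (at x) (axis i 1))))"

definition smooth_on_set :: "(real^'n) set \<Rightarrow> (real^'n \<Rightarrow> 'b::real_normed_vector) \<Rightarrow> bool" where
  "smooth_on_set S f \<longleftrightarrow> (\<forall>k. Ck k S f)"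

definition is_chart :: "('m::topological_space, 'n::finite) chart \<Rightarrow> bool" where
  "is_chart c \<longleftrightarrow> (case c of (U, \<phi>) \<Rightarrow>
     open U \<and> open (\<phi> ` U) \<and> homeomorphism U (\<phi> ` U) \<phi> (inv_into U \<phi>))"

definition transition :: "('m, 'n) chart \<Rightarrow> ('m, 'n) chart \<Rightarrow> real^'n \<Rightarrow> real^'n" where
  "transition c1 c2 = snd c2 \<circ> inv_into (fst c1) (snd c1)"

definition smooth_atlas :: "('m::topological_space, 'n::finite) chart set \<Rightarrow> bool" where
  "smooth_atlas A \<longleftrightarrow> (\<forall>c\<in>A. is_chart c) \<and> (\<Union>c\<in>A. fst c) = UNIV \<and>
     (\<forall>c1\<in>A. \<forall>c2\<in>A. smooth_on_set (snd c1 ` (fst c1 \<inter> fst c2)) (transition c1 c2))"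

definition gform :: "real^'n^'n \<Rightarrow> real^'n \<Rightarrow> real^'n \<Rightarrow> real" where
  "gform B u v = u \<bullet> (B *v v)"

definition lorentz_sig :: "real^'n^'n \<Rightarrow> bool" where
  "lorentz_sig B \<longleftrightarrow> transpose B = B \<and>
     (\<exists>(P::real^'n^'n) i0. invertible P \<and>
        transpose P ** B ** P = (\<chi> i j. if i = j then (if i = i0 then -1 else 1) else 0))"

text \<open>(A, G, X) is a time-oriented Lorentzian manifold structure on the type 'm:
  A is a smooth atlas, G c gives the coordinate matrix of the metric g in chart c
  (smooth, Lorentzian, transforming as a (0,2)-tensor), and X c is the coordinate
  expression in chart c of a continuous timelike vector field X (the time orientation).\<close>
definition time_oriented_lorentzian ::
  "('m::topological_space, 'n::finite) chart set \<Rightarrow> (('m, 'n) chart \<Rightarrow> real^'n \<Rightarrow> real^'n^'n)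
    \<Rightarrow> (('m, 'n) chart \<Rightarrow> real^'n \<Rightarrow> real^'n) \<Rightarrow> bool" where
  "time_oriented_lorentzian A G X \<longleftrightarrow>
     smooth_atlas A \<and>
     (\<forall>c\<in>A. smooth_on_set (snd c ` fst c) (G c) \<and>
        (\<forall>a\<in>snd c ` fst c. lorentz_sig (G c a))) \<and>
     (\<forall>c1\<in>A. \<forall>c2\<in>A. \<forall>p\<in>fst c1 \<inter> fst c2. \<forall>u v.
        gform (G c1 (snd c1 p)) u v =
        gform (G c2 (snd c2 p)) (frechet_derivative (transition c1 c2) (at (snd c1 p)) u)
                                (frechet_derivative (transition c1 c2) (at (snd c1 p)) v)) \<and>
     (\<forall>c\<in>A. continuous_on (snd c ` fst c) (X c) \<and>
        (\<forall>a\<in>snd c ` fst c. gform (G c a) (X c a) (X c a) < 0)) \<and>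
     (\<forall>c1\<in>A. \<forall>c2\<in>A. \<forall>p\<in>fst c1 \<inter> fst c2.
        X c2 (snd c2 p) = frechet_derivative (transition c1 c2) (at (snd c1 p)) (X c1 (snd c1 p)))"

definition fut_timelike_curve ::
  "('m::topological_space, 'n::finite) chart set \<Rightarrow> (('m, 'n) chart \<Rightarrow> real^'n \<Rightarrow> real^'n^'n)
    \<Rightarrow> (('m, 'n) chart \<Rightarrow> real^'n \<Rightarrow> real^'n) \<Rightarrow> (real \<Rightarrow> 'm) \<Rightarrow> 'm \<Rightarrow> 'm \<Rightarrow> bool" where
  "fut_timelike_curve A G X \<gamma> a b \<longleftrightarrow>
     continuous_on {0..1} \<gamma> \<and> \<gamma> 0 = a \<and> \<gamma> 1 = b \<and>
     (\<forall>c\<in>A. \<exists>\<gamma>'. continuous_on {t\<in>{0..1}. \<gamma> t \<in> fst c} \<gamma>' \<and>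
        (\<forall>t\<in>{t\<in>{0..1}. \<gamma> t \<in> fst c}.
           ((snd c \<circ> \<gamma>) has_vector_derivative \<gamma>' t) (at t within {t\<in>{0..1}. \<gamma> t \<in> fst c}) \<and>
           gform (G c (snd c (\<gamma> t))) (\<gamma>' t) (\<gamma>' t) < 0 \<and>
           gform (G c (snd c (\<gamma> t))) (\<gamma>' t) (X c (snd c (\<gamma> t))) < 0))"

definition chron ::
  "('m::topological_space, 'n::finite) chart set \<Rightarrow> (('m, 'n) chart \<Rightarrow> real^'n \<Rightarrow> real^'n^'n)
    \<Rightarrow> (('m, 'n) chart \<Rightarrow> real^'n \<Rightarrow> real^'n) \<Rightarrow> 'm \<Rightarrow> 'm \<Rightarrow> bool" where
  "chron A G X a b \<longleftrightarrow> (\<exists>\<gamma>. fut_timelike_curve A G X \<gamma> a b)"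

definition Ifut where "Ifut A G X x = {b. chron A G X x b}"
definition Ipast where "Ipast A G X x = {b. chron A G X b x}"

definition down_set where
  "down_set A G X U = interior {c. \<forall>u\<in>U. chron A G X c u}"
definition up_set where
  "up_set A G X U = interior {c. \<forall>u\<in>U. chron A G X u c}"

end

theory Submission
  imports Defs
begin

lemma gform_add_left: "gform B (u + v) w = gform B u w + gform B v w"
  by (simp add: gform_def inner_add_left)
lemma gform_add_right: "gform B w (u + v) = gform B w u + gform B w v"
  by (simp add: gform_def matrix_vector_right_distrib inner_add_right)
lemma gform_scale_left: "gform B (c *\<^sub>R u) w = c * gform B u w"
  by (simp add: gform_def)
lemma gform_scale_right: "gform B w (c *\<^sub>R u) = c * gform B w u"
  by (simp add: gform_def matrix_vector_mult_scaleR)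
lemma gform_minus_left: "gform B (- u) w = - gform B u w"
  by (simp add: gform_def)
lemma gform_minus_right: "gform B w (- u) = - gform B w u"
  using gform_scale_right[of B w "-1" u] by simp
lemma gform_diff_left: "gform B (u - v) w = gform B u w - gform B v w"
  by (simp add: gform_def inner_diff_left)
lemma gform_diff_right: "gform B w (u - v) = gform B w u - gform B w v"
  by (simp add: gform_def matrix_vector_mult_diff_distrib inner_diff_right)

lemmas gform_lin = gform_add_left gform_add_right gform_scale_left gform_scale_right
  gform_minus_left gform_minus_right gform_diff_left gform_diff_right

lemma gform_sym: assumes "transpose B = B" shows "gform B u v = gform B v u"
proof -
  have "gform B u v = inner (u v* B) v" by (simp add: gform_def dot_lmul_matrix)
  also have "u v* B = transpose B *v u" by simp
  finally show ?thesis using assms by (simp add: gform_def inner_commute)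
qed

lemma aux_dot: "inner z (y v* (P::real^'n^'m)) = inner (P *v z) y"
  by (metis dot_lmul_matrix inner_commute)

lemma gform_congr: "gform (transpose P ** B ** P) z z = gform B (P *v z) (P *v z)"
proof -
  have "gform (transpose P ** B ** P) z z = inner z (transpose P *v (B *v (P *v z)))"
    by (simp add: gform_def matrix_vector_mul_assoc matrix_mul_assoc)
  also have "\<dots> = inner (P *v z) (B *v (P *v z))"
    using aux_dot[of z "B *v (P *v z)" P] by simp
  finally show ?thesis by (simp add: gform_def)
qed

lemma gform_diag:
  "gform (\<chi> i j. if i = j then d i else 0) z z = (\<Sum>i\<in>UNIV. d i * (z $ i)^2)"
proof -
  have "(\<chi> i j. if i = j then d i else 0) *v z = (\<chi> i. d i * z $ i)"
  proof -
    have "(\<Sum>j\<in>UNIV. (if i = j then d i else 0) * z $ j) = d i * z $ i" for i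
      by (simp add: if_distrib[of "\<lambda>x. x * _"] sum.delta cong: if_cong)
    thus ?thesis by (simp add: matrix_vector_mult_def)
  qed
  thus ?thesis by (simp add: gform_def inner_vec_def power2_eq_square ac_simps)
qed

lemma LA1:
  fixes B :: "real^'n^'n"
  assumes L: "lorentz_sig B" and X: "gform B X X < 0" and o: "gform B v X = 0"
  shows "gform B v v \<ge> 0"
proof (rule ccontr)
  assume "\<not> gform B v v \<ge> 0"
  hence vneg: "gform B v v < 0" by simp
  from L obtain P :: "real^'n^'n" and i0 where sym: "transpose B = B" and inv: "invertible P" and
    D: "transpose P ** B ** P = (\<chi> i j. if i = j then (if i = i0 then -1 else 1) else 0)"
    unfolding lorentz_sig_def by blast
  from inv obtain Q where "P ** Q = mat 1" using invertible_right_inverse by blast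
  hence PQ: "P *v (Q *v y) = y" for y by (simp add: matrix_vector_mul_assoc)
  define v' where "v' = Q *v v"
  define X' where "X' = Q *v X"
  have oX: "gform B X v = 0" using o gform_sym[OF sym] by simp
  obtain \<alpha> \<beta> :: real where ab: "(\<alpha>, \<beta>) \<noteq> (0,0)" and z0: "\<alpha> * v' $ i0 + \<beta> * X' $ i0 = 0"
  proof (cases "X' $ i0 = 0 \<and> v' $ i0 = 0")
    case True then show ?thesis using that[of 1 0] by simp
  next
    case False then show ?thesis using that[of "X' $ i0" "- v' $ i0"] by (auto simp: algebra_simps)
  qed
  define z where "z = \<alpha> *\<^sub>R v' + \<beta> *\<^sub>R X'"
  have Pz: "P *v z = \<alpha> *\<^sub>R v + \<beta> *\<^sub>R X"
    by (simp add: z_def matrix_vector_right_distrib matrix_vector_mult_scaleR PQ v'_def X'_def)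
  have "gform B (P *v z) (P *v z) = \<alpha>^2 * gform B v v + \<beta>^2 * gform B X X"
    unfolding Pz by (simp add: gform_lin o oX power2_eq_square algebra_simps)
  also have "\<dots> < 0"
  proof -
    have "\<alpha>^2 * gform B v v \<le> 0" "\<beta>^2 * gform B X X \<le> 0"
      using vneg X by (auto intro: mult_nonneg_nonpos)
    moreover have "\<alpha> \<noteq> 0 \<or> \<beta> \<noteq> 0" using ab by auto
    hence "\<alpha>^2 * gform B v v < 0 \<or> \<beta>^2 * gform B X X < 0"
      using vneg X by (auto intro: mult_pos_neg)
    ultimately show ?thesis by linarith
  qed
  finally have neg: "gform B (P *v z) (P *v z) < 0" .
  have "gform B (P *v z) (P *v z) = (\<Sum>i\<in>UNIV. (if i = i0 then -1 else 1) * (z $ i)^2)"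
    using gform_congr[of P B z] D gform_diag[of "\<lambda>i. if i = i0 then -1 else 1" z] by simp
  also have "\<dots> = (\<Sum>i\<in>UNIV. (if i = i0 then 0 else 1) * (z $ i)^2)"
    by (rule sum.cong) (auto simp: z_def z0)
  also have "\<dots> \<ge> 0" by (rule sum_nonneg) auto
  finally show False using neg by simp
qed

lemma quad_disc:
  fixes a b c :: real
  assumes "\<And>t. a + 2 * t * b + t^2 * c \<ge> 0"
  shows "b^2 \<le> a * c"
proof (cases "c = 0")
  case True
  show ?thesis
  proof (cases "b = 0")
    case False
    have "a + 2 * (- (\<bar>a\<bar> + 1) / (2*b)) * b + (- (\<bar>a\<bar> + 1) / (2*b))^2 * c \<ge> 0"
      by (rule assms)
    moreover have "2 * (- (\<bar>a\<bar> + 1) / (2*b)) * b = - (\<bar>a\<bar> + 1)" using False by (simp add: field_simps)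
    ultimately have "a - (\<bar>a\<bar> + 1) \<ge> 0" using True by simp
    thus ?thesis by simp
  qed (use True in simp)
next
  case False
  have c0: "c \<ge> 0"
  proof (rule ccontr)
    assume "\<not> c \<ge> 0" hence c: "c < 0" by simp
    define t where "t = (\<bar>a\<bar> + 2*\<bar>b\<bar> + 1) / (- c) + 1"
    have t1: "t \<ge> 1" using c divide_nonneg_neg[of "\<bar>a\<bar> + 2 * \<bar>b\<bar> + 1" c] by (simp add: t_def)
    have "a + 2 * t * b + t^2 * c \<le> \<bar>a\<bar> * t + 2 * t * \<bar>b\<bar> + t^2 * c"
    proof -
      have "a \<le> \<bar>a\<bar> * t" using t1 by (metis abs_ge_self dual_order.trans mult_cancel_left1 mult_left_mono abs_ge_zero)
      moreover have "2 * t * b \<le> 2 * t * \<bar>b\<bar>" using t1 by (intro mult_left_mono) auto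
      ultimately show ?thesis by linarith
    qed
    also have "\<dots> = t * (\<bar>a\<bar> + 2 * \<bar>b\<bar> + t * c)" by (simp add: power2_eq_square algebra_simps)
    also have "\<dots> < 0"
    proof -
      have "t * c \<le> ((\<bar>a\<bar> + 2*\<bar>b\<bar> + 1) / (- c) + 1) * c" using t_def by simp
      also have "\<dots> = - (\<bar>a\<bar> + 2*\<bar>b\<bar> + 1) + c" using c by (simp add: field_simps)
      finally have "\<bar>a\<bar> + 2 * \<bar>b\<bar> + t * c < 0" using c by linarith
      thus ?thesis using t1 by (simp add: mult_pos_neg)
    qed
    finally show False using assms[of t] by linarith
  qed
  hence c: "c > 0" using False by simp
  have "a + 2 * (- b / c) * b + (- b / c)^2 * c \<ge> 0" by (rule assms)
  hence "a - b^2 / c \<ge> 0" using c by (simp add: power2_eq_square field_simps)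
  hence "b^2 / c \<le> a" by simp
  thus ?thesis using c by (simp add: field_simps mult.commute)
qed

lemma LA2:
  fixes B :: "real^'n^'n"
  assumes L: "lorentz_sig B" and X: "gform B X X < 0"
    and u: "gform B u X = 0" and v: "gform B v X = 0"
  shows "(gform B u v)^2 \<le> gform B u u * gform B v v"
proof (rule quad_disc)
  fix t :: real
  have sym: "transpose B = B" using L by (simp add: lorentz_sig_def)
  have "gform B (u + t *\<^sub>R v) X = 0" using u v by (simp add: gform_lin)
  hence "gform B (u + t *\<^sub>R v) (u + t *\<^sub>R v) \<ge> 0" by (rule LA1[OF L X])
  also have "gform B (u + t *\<^sub>R v) (u + t *\<^sub>R v) =
     gform B u u + 2 * t * gform B u v + t^2 * gform B v v"
    using gform_sym[OF sym, of v u] by (simp add: gform_lin power2_eq_square algebra_simps)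
  finally show "gform B u u + 2 * t * gform B u v + t^2 * gform B v v \<ge> 0" .
qed

definition tcone :: "real^'n^'n \<Rightarrow> real^'n \<Rightarrow> real^'n \<Rightarrow> bool" where
  "tcone B X v \<longleftrightarrow> gform B v v < 0 \<and> gform B v X < 0"

lemma LA3:
  fixes B :: "real^'n^'n"
  assumes L: "lorentz_sig B" and X: "gform B X X < 0"
    and w: "tcone B X w" and e: "tcone B X e"
  shows "gform B w e < 0"
proof -
  have sym: "transpose B = B" using L by (simp add: lorentz_sig_def)
  note gs = gform_sym[OF sym]
  define q where "q = - gform B X X"
  have q: "q > 0" using X by (simp add: q_def)
  define aw where "aw = - gform B w X / q"
  define ae where "ae = - gform B e X / q"
  have aw: "aw > 0" using w q divide_neg_pos[of "gform B w X" q] by (simp add: aw_def tcone_def)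
  have ae: "ae > 0" using e q divide_neg_pos[of "gform B e X" q] by (simp add: ae_def tcone_def)
  define w' where "w' = w - aw *\<^sub>R X"
  define e' where "e' = e - ae *\<^sub>R X"
  have w'X: "gform B w' X = 0" using q by (simp add: w'_def aw_def gform_lin q_def)
  have e'X: "gform B e' X = 0" using q by (simp add: e'_def ae_def gform_lin q_def)
  have wd: "w = w' + aw *\<^sub>R X" by (simp add: w'_def)
  have ed: "e = e' + ae *\<^sub>R X" by (simp add: e'_def)
  have Qw: "gform B w w = gform B w' w' - aw^2 * q"
    unfolding wd using w'X gs[of X w'] by (simp add: gform_lin q_def power2_eq_square algebra_simps)
  have Qe: "gform B e e = gform B e' e' - ae^2 * q"
    unfolding ed using e'X gs[of X e'] by (simp add: gform_lin q_def power2_eq_square algebra_simps)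
  have gwe: "gform B w e = gform B w' e' - aw * ae * q"
    unfolding wd ed using w'X e'X gs[of X e'] gs[of X w'] by (simp add: gform_lin q_def algebra_simps)
  have Pw: "gform B w' w' \<ge> 0" by (rule LA1[OF L X w'X])
  have Pe: "gform B e' e' \<ge> 0" by (rule LA1[OF L X e'X])
  have lw: "gform B w' w' < aw^2 * q" using Qw w by (simp add: tcone_def)
  have le: "gform B e' e' < ae^2 * q" using Qe e by (simp add: tcone_def)
  have "(gform B w' e')^2 \<le> gform B w' w' * gform B e' e'" by (rule LA2[OF L X w'X e'X])
  also have "\<dots> < (aw^2 * q) * (ae^2 * q)"
    using Pw Pe lw le by (meson mult_strict_mono' ) 
  also have "\<dots> = (aw * ae * q)^2" by (simp add: power2_eq_square)
  finally have "\<bar>gform B w' e'\<bar> < aw * ae * q"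
    using aw ae q by (metis abs_of_pos mult_pos_pos power2_less_imp_less abs_ge_zero power2_abs)
  thus ?thesis using gwe by linarith
qed

lemma tcone_add:
  fixes B :: "real^'n^'n"
  assumes L: "lorentz_sig B" and X: "gform B X X < 0"
    and w: "tcone B X w" and e: "tcone B X e" and a: "\<alpha> \<ge> 0"
  shows "tcone B X (w + \<alpha> *\<^sub>R e)"
proof -
  have sym: "transpose B = B" using L by (simp add: lorentz_sig_def)
  have we: "gform B w e < 0" by (rule LA3[OF L X w e])
  have "gform B (w + \<alpha> *\<^sub>R e) (w + \<alpha> *\<^sub>R e) = gform B w w + 2 * \<alpha> * gform B w e + \<alpha>^2 * gform B e e"
    using gform_sym[OF sym, of e w] by (simp add: gform_lin power2_eq_square algebra_simps)
  also have "\<dots> < 0"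
  proof -
    have "2 * \<alpha> * gform B w e \<le> 0" using we a by (simp add: mult_nonneg_nonpos)
    moreover have "\<alpha>^2 * gform B e e \<le> 0" using e by (simp add: tcone_def mult_nonneg_nonpos)
    ultimately show ?thesis using w by (simp add: tcone_def)
  qed
  finally have 1: "gform B (w + \<alpha> *\<^sub>R e) (w + \<alpha> *\<^sub>R e) < 0" .
  have "gform B (w + \<alpha> *\<^sub>R e) X = gform B w X + \<alpha> * gform B e X" by (simp add: gform_lin)
  also have "\<dots> < 0" using w e a by (simp add: tcone_def mult_nonneg_nonpos add_neg_nonpos)
  finally show ?thesis using 1 by (simp add: tcone_def)
qed

lemma tcone_scale:
  assumes "tcone B X v" "c > 0" shows "tcone B X (c *\<^sub>R v)"
  using assms by (simp add: tcone_def gform_lin mult_pos_neg power2_eq_square)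

lemma norm_mv: "norm ((A::real^'n^'m) *v x) \<le> norm A * norm x"
proof -
  have c: "\<bar>(A *v x) $ i\<bar> \<le> norm (A $ i) * norm x" for i
    by (simp add: matrix_mult_dot Cauchy_Schwarz_ineq2)
  have "(norm (A *v x))^2 = (\<Sum>i\<in>UNIV. ((A *v x) $ i)^2)"
    unfolding power2_norm_eq_inner by (simp add: inner_vec_def power2_eq_square)
  also have "\<dots> \<le> (\<Sum>i\<in>UNIV. (norm (A $ i) * norm x)^2)"
    by (rule sum_mono) (metis c abs_ge_zero power2_abs power_mono)
  also have "\<dots> = (\<Sum>i\<in>UNIV. (norm (A $ i))^2) * (norm x)^2"
    by (simp add: power_mult_distrib sum_distrib_right)
  also have "(\<Sum>i\<in>UNIV. (norm (A $ i))^2) = (norm A)^2"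
    unfolding power2_norm_eq_inner by (simp add: inner_vec_def)
  finally have "(norm (A *v x))^2 \<le> (norm A * norm x)^2" by (simp add: power_mult_distrib)
  thus ?thesis by (meson abs_le_square_iff abs_of_nonneg norm_ge_zero order_trans abs_ge_self
       mult_nonneg_nonneg power2_le_imp_le)
qed

lemma mv_bilinear: "bounded_bilinear (\<lambda>(A::real^'n^'m) x. A *v x)"
proof
  fix A A' :: "real^'n^'m" and x x' :: "real^'n" and r :: real
  show "(A + A') *v x = A *v x + A' *v x" by (simp add: matrix_vector_mult_add_rdistrib)
  show "A *v (x + x') = A *v x + A *v x'" by (simp add: matrix_vector_right_distrib)
  show "(r *\<^sub>R A) *v x = r *\<^sub>R (A *v x)" by (simp add: scaleR_matrix_vector_assoc)
  show "A *v (r *\<^sub>R x) = r *\<^sub>R (A *v x)" by (simp add: matrix_vector_mult_scaleR)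
next
  show "\<exists>K. \<forall>(A::real^'n^'m) x. norm (A *v x) \<le> norm A * norm x * K"
    by (rule exI[of _ 1]) (simp add: norm_mv)
qed

lemma gform_bound: "\<bar>gform M u v\<bar> \<le> norm M * norm u * norm v"
proof -
  have "\<bar>gform M u v\<bar> \<le> norm u * norm (M *v v)" unfolding gform_def by (rule Cauchy_Schwarz_ineq2)
  also have "\<dots> \<le> norm u * (norm M * norm v)" by (simp add: mult_left_mono norm_mv)
  finally show ?thesis by (simp add: ac_simps)
qed

lemma continuous_on_mv [continuous_intros]:
  "continuous_on S f \<Longrightarrow> continuous_on S g \<Longrightarrow> continuous_on S (\<lambda>x. (f x :: real^'n^'m) *v g x)"
  using bounded_bilinear.continuous_on[OF mv_bilinear] by blast

lemma continuous_on_gform [continuous_intros]: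
  "continuous_on S f \<Longrightarrow> continuous_on S g \<Longrightarrow> continuous_on S h \<Longrightarrow>
   continuous_on S (\<lambda>x. gform (f x) (g x) (h x))"
  unfolding gform_def by (intro continuous_intros)

lemma STAB:
  fixes Gc :: "real^'n \<Rightarrow> real^'n^'n" and Xc :: "real^'n \<Rightarrow> real^'n"
  assumes Om: "open Om" "a \<in> Om" and cG: "continuous_on Om Gc" and cX: "continuous_on Om Xc"
    and t: "tcone (Gc a) (Xc a) e0"
  shows "\<exists>\<epsilon>>0. cball a \<epsilon> \<subseteq> Om \<and> (\<forall>y u. dist y a < \<epsilon> \<longrightarrow> dist u e0 < \<epsilon> \<longrightarrow> tcone (Gc y) (Xc y) u)"
proof -
  define S where "S = Om \<times> (UNIV :: (real^'n) set)"
  have oS: "open S" using Om by (simp add: S_def open_Times)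
  have fS: "fst ` S \<subseteq> Om" by (auto simp: S_def)
  have cG': "continuous_on S (\<lambda>p. Gc (fst p))"
    by (rule continuous_on_compose2[OF cG _ fS]) (intro continuous_intros)
  have cX': "continuous_on S (\<lambda>p. Xc (fst p))"
    by (rule continuous_on_compose2[OF cX _ fS]) (intro continuous_intros)
  have cf: "continuous_on S (\<lambda>p. gform (Gc (fst p)) (snd p) (snd p))"
    by (intro continuous_intros cG')
  have cg: "continuous_on S (\<lambda>p. gform (Gc (fst p)) (snd p) (Xc (fst p)))"
    by (intro continuous_intros cG' cX')
  have o1: "open (S \<inter> (\<lambda>p. gform (Gc (fst p)) (snd p) (snd p)) -` {..<0})"
    by (rule continuous_open_preimage[OF cf oS]) auto
  have o2: "open (S \<inter> (\<lambda>p. gform (Gc (fst p)) (snd p) (Xc (fst p))) -` {..<0})"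
    by (rule continuous_open_preimage[OF cg oS]) auto
  define W where "W = (S \<inter> (\<lambda>p. gform (Gc (fst p)) (snd p) (snd p)) -` {..<0}) \<inter>
     (S \<inter> (\<lambda>p. gform (Gc (fst p)) (snd p) (Xc (fst p))) -` {..<0})"
  have oW: "open W" using o1 o2 by (simp add: W_def open_Int)
  have inW: "(a, e0) \<in> W" using t Om by (simp add: W_def S_def tcone_def)
  obtain r where r: "r > 0" "ball (a, e0) r \<subseteq> W" using oW inW open_contains_ball by blast
  obtain r2 where r2: "r2 > 0" "cball a r2 \<subseteq> Om" using Om open_contains_cball by blast
  define \<epsilon> where "\<epsilon> = min (r/2) r2"
  have "\<epsilon> > 0" using r r2 by (simp add: \<epsilon>_def)
  moreover have "cball a \<epsilon> \<subseteq> Om" using r2 by (auto simp: \<epsilon>_def)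
  moreover have "tcone (Gc y) (Xc y) u" if "dist y a < \<epsilon>" "dist u e0 < \<epsilon>" for y u
  proof -
    have "dist (y, u) (a, e0) \<le> \<bar>dist y a\<bar> + \<bar>dist u e0\<bar>"
      unfolding dist_Pair_Pair by (rule sqrt_sum_squares_le_sum_abs)
    also have "\<dots> < r" using that by (simp add: \<epsilon>_def)
    finally have "(y, u) \<in> W" using r by (auto simp: dist_commute)
    thus ?thesis by (simp add: W_def tcone_def)
  qed
  ultimately show ?thesis by blast
qed

lemma gform_diff_mat: "gform (A - B) u v = gform A u v - gform B u v"
  by (simp add: gform_def matrix_vector_mult_diff_rdistrib inner_diff_right)

lemma CURVE:
  fixes Gc :: "real^'n \<Rightarrow> real^'n^'n" and Xc :: "real^'n \<Rightarrow> real^'n" and bt w :: "real \<Rightarrow> real^'n"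
  assumes LX: "\<forall>y\<in>Om. lorentz_sig (Gc y) \<and> gform (Gc y) (Xc y) (Xc y) < 0"
    and cG: "continuous_on Om Gc" and cX: "continuous_on Om Xc"
    and eps: "\<epsilon> > 0" "cball a \<epsilon> \<subseteq> Om"
    and stab: "\<forall>y u. dist y a < \<epsilon> \<longrightarrow> dist u e0 < \<epsilon> \<longrightarrow> tcone (Gc y) (Xc y) u"
    and dl: "\<delta> > 0" "dist ((1/\<delta>) *\<^sub>R e) e0 < \<epsilon>/2" "norm e < \<epsilon>/2"
    and t0: "\<tau>0 > 0"
    and cb: "continuous_on {0..\<tau>0} bt" and cw: "continuous_on {0..\<tau>0} w"
    and near: "\<forall>s\<in>{0..\<tau>0}. dist (bt s) (a + e) < \<epsilon>/2"
    and tw: "\<forall>s\<in>{0..\<tau>0}. tcone (Gc (bt s)) (Xc (bt s)) (w s)"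
  shows "\<exists>\<tau>. 0 < \<tau> \<and> \<tau> < \<tau>0 \<and> (\<forall>s\<in>{0..\<tau>}. dist (bt s - ((1 - s/\<tau>)^2) *\<^sub>R e) a < \<epsilon> \<and>
          tcone (Gc (bt s - ((1 - s/\<tau>)^2) *\<^sub>R e)) (Xc (bt s - ((1 - s/\<tau>)^2) *\<^sub>R e))
             (w s + (2 * (1 - s/\<tau>) / \<tau>) *\<^sub>R e))"
proof -
  have btin: "bt s \<in> cball a \<epsilon>" if "s \<in> {0..\<tau>0}" for s
  proof -
    have "dist (bt s) a \<le> dist (bt s) (a + e) + dist (a + e) a" by (rule dist_triangle)
    also have "dist (a + e) a = norm e" by (simp add: dist_norm)
    moreover have "dist (bt s) (a + e) < \<epsilon>/2" using near that by auto
    ultimately show ?thesis using dl by (simp add: dist_commute)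
  qed
  hence btO: "bt ` {0..\<tau>0} \<subseteq> Om" using eps by auto
  obtain K where K: "K > 0" "\<forall>s\<in>{0..\<tau>0}. norm (w s) \<le> K"
  proof -
    have "compact (w ` {0..\<tau>0})" by (rule compact_continuous_image[OF cw]) simp
    hence "bounded (w ` {0..\<tau>0})" by (rule compact_imp_bounded)
    then obtain K where "K > 0" "\<forall>x\<in>w ` {0..\<tau>0}. norm x \<le> K" using bounded_pos by blast
    thus ?thesis using that by auto
  qed
  define f where "f s = max (gform (Gc (bt s)) (w s) (w s)) (gform (Gc (bt s)) (w s) (Xc (bt s)))" for s
  have cGb: "continuous_on {0..\<tau>0} (\<lambda>s. Gc (bt s))" by (rule continuous_on_compose2[OF cG cb btO])
  have cXb: "continuous_on {0..\<tau>0} (\<lambda>s. Xc (bt s))" by (rule continuous_on_compose2[OF cX cb btO])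
  have cf: "continuous_on {0..\<tau>0} f" unfolding f_def
    by (intro continuous_intros cGb cXb cw)
  obtain s0 where s0: "s0 \<in> {0..\<tau>0}" "\<forall>s\<in>{0..\<tau>0}. f s \<le> f s0"
    using continuous_attains_sup[OF compact_Icc _ cf] t0 by auto
  define m where "m = - f s0"
  have m: "m > 0" using tw s0 by (simp add: m_def f_def tcone_def)
  have fm: "gform (Gc (bt s)) (w s) (w s) \<le> - m \<and> gform (Gc (bt s)) (w s) (Xc (bt s)) \<le> - m"
    if "s \<in> {0..\<tau>0}" for s using s0 that by (force simp: m_def f_def)
  have uG: "uniformly_continuous_on (cball a \<epsilon>) Gc"
    by (rule compact_uniformly_continuous[OF continuous_on_subset[OF cG eps(2)]]) simp
  have uH: "uniformly_continuous_on (cball a \<epsilon>) (\<lambda>y. Gc y *v Xc y)"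
    by (rule compact_uniformly_continuous)
       (intro continuous_intros continuous_on_subset[OF cG eps(2)] continuous_on_subset[OF cX eps(2)], simp)
  obtain \<rho>1 where r1: "\<rho>1 > 0" "\<forall>y\<in>cball a \<epsilon>. \<forall>y'\<in>cball a \<epsilon>. dist y' y < \<rho>1 \<longrightarrow> dist (Gc y') (Gc y) < m / K^2"
    using uG m K unfolding uniformly_continuous_on_def by (metis divide_pos_pos zero_less_power)
  obtain \<rho>2 where r2: "\<rho>2 > 0" "\<forall>y\<in>cball a \<epsilon>. \<forall>y'\<in>cball a \<epsilon>. dist y' y < \<rho>2 \<longrightarrow>
       dist (Gc y' *v Xc y') (Gc y *v Xc y) < m / K"
    using uH m K unfolding uniformly_continuous_on_def by (metis divide_pos_pos)
  define \<rho> where "\<rho> = min \<rho>1 \<rho>2"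
  have \<rho>: "\<rho> > 0" using r1 r2 by (simp add: \<rho>_def)
  define \<theta> where "\<theta> = min 1 (\<rho> / (norm e + 1))"
  have \<theta>: "\<theta> > 0" "\<theta> \<le> 1" "\<theta> * norm e < \<rho>"
  proof -
    have "norm e + 1 > 0" by (simp add: add_nonneg_pos)
    thus "\<theta> > 0" "\<theta> \<le> 1" using \<rho> by (auto simp: \<theta>_def)
    have "\<theta> * norm e \<le> (\<rho> / (norm e + 1)) * norm e"
      by (intro mult_right_mono) (auto simp: \<theta>_def)
    also have "\<dots> < \<rho>"
    proof -
      have n: "norm e + 1 > 0" by (simp add: add_nonneg_pos)
      have "\<rho> * norm e < \<rho> * (norm e + 1)" using \<rho> by simp
      thus ?thesis using n by (simp add: field_simps)
    qed
    finally show "\<theta> * norm e < \<rho>" .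
  qed
  define \<tau> where "\<tau> = min (\<tau>0/2) (\<epsilon> * \<theta> * \<delta> / K)"
  have \<tau>: "\<tau> > 0" "\<tau> < \<tau>0" "\<tau> \<le> \<epsilon> * \<theta> * \<delta> / K"
    using t0 eps \<theta> dl K by (auto simp: \<tau>_def)
  have main: "dist (bt s - ((1 - s/\<tau>)^2) *\<^sub>R e) a < \<epsilon> \<and>
          tcone (Gc (bt s - ((1 - s/\<tau>)^2) *\<^sub>R e)) (Xc (bt s - ((1 - s/\<tau>)^2) *\<^sub>R e))
             (w s + (2 * (1 - s/\<tau>) / \<tau>) *\<^sub>R e)" if s: "s \<in> {0..\<tau>}" for s
  proof -
    define k where "k = 1 - s/\<tau>"
    have k: "0 \<le> k" "k \<le> 1" using s \<tau> by (auto simp: k_def field_simps)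
    have sin: "s \<in> {0..\<tau>0}" using s \<tau> by auto
    define y where "y = bt s - (k^2) *\<^sub>R e"
    have k2: "0 \<le> k^2" "k^2 \<le> 1" "k^2 \<le> k" using k by (auto simp: power2_eq_square mult_le_one mult_left_le_one_le)
    have dy: "dist y a < \<epsilon>"
    proof -
      have "y - a = (bt s - (a + e)) + (1 - k^2) *\<^sub>R e" by (simp add: y_def algebra_simps)
      hence "dist y a \<le> norm (bt s - (a + e)) + norm ((1 - k^2) *\<^sub>R e)"
        unfolding dist_norm by (metis norm_triangle_ineq)
      also have "norm ((1 - k^2) *\<^sub>R e) \<le> norm e" using k2 by (simp add: mult_left_le_one_le)
      moreover have "dist (bt s) (a + e) < \<epsilon>/2" using near sin by auto
      ultimately show ?thesis using dl by (simp add: dist_norm)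
    qed
    hence yO: "y \<in> Om" using eps by (auto simp: dist_commute subset_iff)
    have Ly: "lorentz_sig (Gc y)" "gform (Gc y) (Xc y) (Xc y) < 0" using LX yO by auto
    have te: "tcone (Gc y) (Xc y) e"
    proof -
      have "dist ((1/\<delta>) *\<^sub>R e) e0 < \<epsilon>" using dl(2) eps(1) by linarith
      hence "tcone (Gc y) (Xc y) ((1/\<delta>) *\<^sub>R e)" using stab dy by blast
      from tcone_scale[OF this dl(1)] show ?thesis using dl by simp
    qed
    have "tcone (Gc y) (Xc y) (w s + (2 * k / \<tau>) *\<^sub>R e)"
    proof (cases "k < \<theta>")
      case True
      have dyb: "dist y (bt s) < \<rho>"
      proof -
        have "dist y (bt s) = k^2 * norm e" using k2 by (simp add: y_def dist_norm)
        also have "\<dots> \<le> k * norm e" using k2 by (simp add: mult_right_mono)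
        also have "\<dots> \<le> \<theta> * norm e" using True by (simp add: mult_right_mono)
        finally show ?thesis using \<theta> by simp
      qed
      have yb: "y \<in> cball a \<epsilon>" using dy by (simp add: dist_commute)
      have bb: "bt s \<in> cball a \<epsilon>" using btin sin by simp
      have d1: "dist (Gc y) (Gc (bt s)) < m / K^2" using r1 yb bb dyb by (simp add: \<rho>_def)
      have d2: "dist (Gc y *v Xc y) (Gc (bt s) *v Xc (bt s)) < m / K" using r2 yb bb dyb by (simp add: \<rho>_def)
      have wK: "norm (w s) \<le> K" using K sin by auto
      have "gform (Gc y) (w s) (w s) - gform (Gc (bt s)) (w s) (w s) \<le> norm (Gc y - Gc (bt s)) * norm (w s) * norm (w s)"
        using gform_bound[of "Gc y - Gc (bt s)" "w s" "w s"] by (simp add: gform_diff_mat)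
      also have "\<dots> \<le> norm (Gc y - Gc (bt s)) * K * K"
        using wK K by (intro mult_mono) (auto intro: mult_nonneg_nonneg)
      also have "\<dots> < (m / K^2) * K * K"
        using d1 K by (intro mult_strict_right_mono) (auto simp: dist_norm)
      also have "\<dots> = m" using K by (simp add: power2_eq_square)
      finally have q1: "gform (Gc y) (w s) (w s) < 0" using fm[OF sin] by linarith
      have "gform (Gc y) (w s) (Xc y) - gform (Gc (bt s)) (w s) (Xc (bt s)) =
            inner (w s) (Gc y *v Xc y - Gc (bt s) *v Xc (bt s))"
        by (simp add: gform_def inner_diff_right)
      also have "\<dots> \<le> norm (w s) * norm (Gc y *v Xc y - Gc (bt s) *v Xc (bt s))"
        by (rule Cauchy_Schwarz_ineq2[THEN abs_le_D1])
      also have "\<dots> \<le> K * norm (Gc y *v Xc y - Gc (bt s) *v Xc (bt s))"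
        using wK by (simp add: mult_right_mono)
      also have "\<dots> < K * (m / K)" using d2 K by (intro mult_strict_left_mono) (auto simp: dist_norm)
      also have "\<dots> = m" using K by simp
      finally have q2: "gform (Gc y) (w s) (Xc y) < 0" using fm[OF sin] by linarith
      have tws: "tcone (Gc y) (Xc y) (w s)" using q1 q2 by (simp add: tcone_def)
      show ?thesis by (rule tcone_add[OF Ly tws te]) (use k \<tau> in simp)
    next
      case False
      define \<alpha> where "\<alpha> = 2 * k / \<tau>"
      have \<alpha>: "\<alpha> \<ge> 2 * \<theta> / \<tau>" using False \<tau> by (simp add: \<alpha>_def divide_right_mono)
      have \<alpha>0: "\<alpha> > 0" using \<alpha> \<theta> \<tau> by (smt (verit) divide_pos_pos)
      define u where "u = (1/\<delta>) *\<^sub>R e + (1 / (\<alpha> * \<delta>)) *\<^sub>R w s"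
      have "dist u e0 \<le> dist ((1/\<delta>) *\<^sub>R e) e0 + norm ((1 / (\<alpha> * \<delta>)) *\<^sub>R w s)"
        unfolding u_def dist_norm by (metis add.commute add_diff_eq norm_triangle_ineq)
      also have "norm ((1 / (\<alpha> * \<delta>)) *\<^sub>R w s) \<le> K / (\<alpha> * \<delta>)"
        using K sin \<alpha>0 dl by (simp add: divide_right_mono)
      also have "K / (\<alpha> * \<delta>) \<le> K / ((2 * \<theta> / \<tau>) * \<delta>)"
        using K \<alpha> \<alpha>0 \<theta> \<tau> dl by (intro divide_left_mono mult_right_mono mult_pos_pos) auto
      also have "\<dots> = K * \<tau> / (2 * \<theta> * \<delta>)" using \<tau> by (simp add: field_simps)
      also have "\<dots> \<le> \<epsilon> / 2"
      proof -
        have "K * \<tau> \<le> \<epsilon> * \<theta> * \<delta>" using \<tau>(3) K by (simp add: field_simps)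
        thus ?thesis using \<theta> dl by (simp add: field_simps)
      qed
      finally have "dist u e0 < \<epsilon>" using dl by linarith
      hence tu: "tcone (Gc y) (Xc y) u" using stab dy by auto
      have "(\<alpha> * \<delta>) *\<^sub>R u = w s + \<alpha> *\<^sub>R e"
        using \<alpha>0 dl by (simp add: u_def scaleR_add_right)
      moreover have "\<alpha> * \<delta> > 0" using \<alpha>0 dl by simp
      ultimately show ?thesis using tcone_scale[OF tu, of "\<alpha> * \<delta>"] by (simp add: \<alpha>_def)
    qed
    thus ?thesis using dy by (simp add: y_def k_def)
  qed
  show ?thesis using \<tau> main by blast
qed

lemma maxsq_deriv: "((\<lambda>u::real. (max 0 u)^2) has_real_derivative 2 * max 0 u) (at u)"
proof (cases "u < 0")
  case True
  have "((\<lambda>u::real. 0) has_real_derivative 2 * max 0 u) (at u)" using True by simp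
  thus ?thesis
    by (rule has_field_derivative_transform_within_open[where S="{..<0}"]) (use True in auto)
next
  case False
  show ?thesis
  proof (cases "u > 0")
    case True
    have "((\<lambda>u::real. u^2) has_real_derivative 2 * u) (at u)"
      by (auto intro!: derivative_eq_intros)
    hence "((\<lambda>u::real. u^2) has_real_derivative 2 * max 0 u) (at u)" using True by simp
    thus ?thesis
      by (rule has_field_derivative_transform_within_open[where S="{0<..}"]) (use True in auto)
  next
    case False
    hence u: "u = 0" using \<open>\<not> u < 0\<close> by simp
    have "((\<lambda>y. ((max 0 y)^2 - (max 0 0)^2) / (y - 0)) \<longlongrightarrow> 0) (at (0::real))"
    proof (rule Lim_null_comparison)
      show "\<forall>\<^sub>F y in at 0. norm (((max 0 y)^2 - (max 0 0)^2) / (y - 0)) \<le> \<bar>y\<bar>"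
      proof (rule always_eventually, intro allI)
        fix y :: real
        show "norm (((max 0 y)^2 - (max 0 0)^2) / (y - 0)) \<le> \<bar>y\<bar>"
          by (cases "y > 0") (auto simp: power2_eq_square abs_mult)
      qed
      show "((\<lambda>y::real. \<bar>y\<bar>) \<longlongrightarrow> 0) (at 0)"
        using tendsto_rabs_zero[OF tendsto_ident_at[of 0 UNIV]] by simp
    qed
    thus ?thesis using u by (simp add: has_field_derivative_iff)
  qed
qed

lemma H_deriv:
  assumes "\<tau> > 0"
  shows "((\<lambda>s::real. (max 0 (1 - s/\<tau>))^2) has_real_derivative (- 2 * max 0 (1 - s/\<tau>) / \<tau>)) (at s)"
proof -
  have d: "((\<lambda>s. 1 - s/\<tau>) has_real_derivative (- 1/\<tau>)) (at s)"
    using assms by (auto intro!: derivative_eq_intros)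
  from DERIV_chain2[OF maxsq_deriv d] show ?thesis using assms by simp
qed

lemma cont_local:
  assumes "\<And>x. x \<in> S \<Longrightarrow> \<exists>T. open T \<and> x \<in> T \<and> continuous_on (S \<inter> T) f"
  shows "continuous_on S f"
  unfolding continuous_on_def
proof
  fix x assume x: "x \<in> S"
  obtain T where T: "open T" "x \<in> T" "continuous_on (S \<inter> T) f" using assms x by blast
  have "(f \<longlongrightarrow> f x) (at x within S \<inter> T)" using T x unfolding continuous_on_def by blast
  moreover have "at x within S \<inter> T = at x within S"
    by (rule at_within_nhd[where S=T]) (use T in auto)
  ultimately show "(f \<longlongrightarrow> f x) (at x within S)" by simp
qed

lemma vd_localize:
  assumes "(f has_vector_derivative f') (at t within S \<inter> T)" "open T" "t \<in> T"
  shows "(f has_vector_derivative f') (at t within S)"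
proof -
  have "at t within S \<inter> T = at t within S"
    by (rule at_within_nhd[where S=T]) (use assms in auto)
  thus ?thesis using assms(1) by simp
qed

lemma nontriv:
  assumes S: "openin (top_of_set {0..1::real}) S" and s: "s \<in> S" "s < 1"
  shows "at s within (S \<inter> {s..}) \<noteq> bot"
proof -
  obtain d where d: "d > 0" "ball s d \<inter> {0..1} \<subseteq> S"
    using S s unfolding openin_contains_ball by blast
  define b where "b = min (s + d) 1"
  have sb: "s < b" using d s by (simp add: b_def)
  have s01: "s \<in> {0..1}" using S s openin_imp_subset by blast
  have sub: "{s<..<b} \<subseteq> (S \<inter> {s..}) - {s}"
  proof
    fix t assume t: "t \<in> {s<..<b}"
    hence "t \<in> ball s d \<inter> {0..1}" using s01 by (auto simp: b_def dist_real_def)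
    thus "t \<in> (S \<inter> {s..}) - {s}" using d t by auto
  qed
  have "s \<in> closure {s<..<b}" using sb by simp
  hence "s \<in> closure ((S \<inter> {s..}) - {s})" using closure_mono[OF sub] by blast
  thus ?thesis by (simp add: at_within_eq_bot_iff)
qed

lemma smooth_cont: "smooth_on_set S f \<Longrightarrow> continuous_on S f"
proof -
  assume "smooth_on_set S f"
  hence "Ck 0 S f" unfolding smooth_on_set_def by blast
  thus ?thesis by simp
qed

lemma smooth_C1: "smooth_on_set S f \<Longrightarrow> f differentiable_on S \<and>
   (\<forall>i. continuous_on S (\<lambda>x. frechet_derivative f (at x) (axis i 1)))"
proof -
  assume "smooth_on_set S f"
  hence "Ck (Suc 0) S f" unfolding smooth_on_set_def by blast
  thus ?thesis by simp
qed

lemma rev_curve: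
  assumes "fut_timelike_curve A G X \<gamma> a b"
  shows "fut_timelike_curve A G (\<lambda>c y. - X c y) (\<lambda>t. \<gamma> (1 - t)) b a"
proof -
  have c0: "continuous_on {0..1} \<gamma>" and e: "\<gamma> 0 = a" "\<gamma> 1 = b"
    and ch: "\<forall>c\<in>A. \<exists>\<gamma>'. continuous_on {t\<in>{0..1}. \<gamma> t \<in> fst c} \<gamma>' \<and>
        (\<forall>t\<in>{t\<in>{0..1}. \<gamma> t \<in> fst c}.
           ((snd c \<circ> \<gamma>) has_vector_derivative \<gamma>' t) (at t within {t\<in>{0..1}. \<gamma> t \<in> fst c}) \<and>
           gform (G c (snd c (\<gamma> t))) (\<gamma>' t) (\<gamma>' t) < 0 \<and>
           gform (G c (snd c (\<gamma> t))) (\<gamma>' t) (X c (snd c (\<gamma> t))) < 0)"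
    using assms unfolding fut_timelike_curve_def by blast+
  have img: "(\<lambda>t::real. 1 - t) ` {0..1} = {0..1}"
    by (auto simp: image_iff intro!: bexI[of _ "1 - _"])
  have "continuous_on {0..1} (\<lambda>t. \<gamma> (1 - t))"
    by (rule continuous_on_compose2[OF c0]) (auto intro!: continuous_intros)
  moreover have "\<exists>\<gamma>'. continuous_on {t\<in>{0..1}. \<gamma> (1 - t) \<in> fst c} \<gamma>' \<and>
        (\<forall>t\<in>{t\<in>{0..1}. \<gamma> (1 - t) \<in> fst c}.
           ((snd c \<circ> (\<lambda>t. \<gamma> (1 - t))) has_vector_derivative \<gamma>' t) (at t within {t\<in>{0..1}. \<gamma> (1 - t) \<in> fst c}) \<and>
           gform (G c (snd c (\<gamma> (1 - t)))) (\<gamma>' t) (\<gamma>' t) < 0 \<and>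
           gform (G c (snd c (\<gamma> (1 - t)))) (\<gamma>' t) (- X c (snd c (\<gamma> (1 - t)))) < 0)"
    if c: "c \<in> A" for c
  proof -
    define S where "S = {t\<in>{0..1}. \<gamma> t \<in> fst c}"
    define R where "R = {t\<in>{0..1::real}. \<gamma> (1 - t) \<in> fst c}"
    obtain g where g: "continuous_on S g" "\<forall>t\<in>S.
           ((snd c \<circ> \<gamma>) has_vector_derivative g t) (at t within S) \<and>
           gform (G c (snd c (\<gamma> t))) (g t) (g t) < 0 \<and>
           gform (G c (snd c (\<gamma> t))) (g t) (X c (snd c (\<gamma> t))) < 0"
      using ch c unfolding S_def by blast
    have RS: "(\<lambda>t. 1 - t) ` R = S"
    proof
      show "(\<lambda>t. 1 - t) ` R \<subseteq> S" by (auto simp: R_def S_def)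
      show "S \<subseteq> (\<lambda>t. 1 - t) ` R"
      proof
        fix x assume "x \<in> S"
        hence "1 - x \<in> R" "x = 1 - (1 - x)" by (auto simp: R_def S_def)
        thus "x \<in> (\<lambda>t. 1 - t) ` R" by blast
      qed
    qed
    have RS': "t \<in> R \<Longrightarrow> 1 - t \<in> S" for t using RS by blast
    have "continuous_on R (\<lambda>t. - g (1 - t))"
      by (intro continuous_intros continuous_on_compose2[OF g(1)]) (use RS in auto)
    moreover have "((snd c \<circ> (\<lambda>t. \<gamma> (1 - t))) has_vector_derivative - g (1 - t)) (at t within R) \<and>
           gform (G c (snd c (\<gamma> (1 - t)))) (- g (1 - t)) (- g (1 - t)) < 0 \<and>
           gform (G c (snd c (\<gamma> (1 - t)))) (- g (1 - t)) (- X c (snd c (\<gamma> (1 - t)))) < 0"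
      if t: "t \<in> R" for t
    proof -
      have d1: "((\<lambda>t. 1 - t) has_vector_derivative (-1)) (at t within R)"
        by (auto intro!: derivative_eq_intros simp: has_real_derivative_iff_has_vector_derivative[symmetric])
      have d2: "((snd c \<circ> \<gamma>) has_vector_derivative g (1 - t)) (at (1 - t) within (\<lambda>t. 1 - t) ` R)"
        using g(2) RS' t RS by auto
      have ch: "(((snd c \<circ> \<gamma>) \<circ> (\<lambda>t. 1 - t)) has_vector_derivative (-1) *\<^sub>R g (1 - t)) (at t within R)"
        by (rule vector_diff_chain_within[OF d1 d2])
      have eqf: "snd c \<circ> (\<lambda>t. \<gamma> (1 - t)) = (snd c \<circ> \<gamma>) \<circ> (\<lambda>t. 1 - t)" by (auto simp: o_def)
      have "((snd c \<circ> (\<lambda>t. \<gamma> (1 - t))) has_vector_derivative - g (1 - t)) (at t within R)"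
        using ch unfolding eqf by simp
      moreover have "gform (G c (snd c (\<gamma> (1 - t)))) (g (1 - t)) (g (1 - t)) < 0 \<and>
           gform (G c (snd c (\<gamma> (1 - t)))) (g (1 - t)) (X c (snd c (\<gamma> (1 - t)))) < 0"
        using g(2) RS' t by blast
      ultimately show ?thesis by (simp add: gform_lin)
    qed
    ultimately show ?thesis unfolding R_def by blast
  qed
  ultimately show ?thesis unfolding fut_timelike_curve_def using e by simp
qed

lemma chron_neg: "chron A G (\<lambda>c y. - X c y) a b \<longleftrightarrow> chron A G X b a"
proof
  assume "chron A G (\<lambda>c y. - X c y) a b"
  then obtain \<gamma> where "fut_timelike_curve A G (\<lambda>c y. - X c y) \<gamma> a b" by (auto simp: chron_def)
  from rev_curve[OF this] show "chron A G X b a" by (auto simp: chron_def)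
next
  assume "chron A G X b a"
  then obtain \<gamma> where "fut_timelike_curve A G X \<gamma> b a" by (auto simp: chron_def)
  from rev_curve[OF this] show "chron A G (\<lambda>c y. - X c y) a b" by (auto simp: chron_def)
qed

locale tol =
  fixes A :: "('m::topological_space, 'n::finite) chart set"
    and G :: "('m, 'n) chart \<Rightarrow> real^'n \<Rightarrow> real^'n^'n"
    and X :: "('m, 'n) chart \<Rightarrow> real^'n \<Rightarrow> real^'n"
  assumes T: "time_oriented_lorentzian A G X"
begin

lemma P1: "smooth_atlas A"
  using T[unfolded time_oriented_lorentzian_def] by (elim conjE) assumption
lemma P2: "\<forall>c\<in>A. smooth_on_set (snd c ` fst c) (G c) \<and> (\<forall>a\<in>snd c ` fst c. lorentz_sig (G c a))"
  using T[unfolded time_oriented_lorentzian_def] by (elim conjE) assumption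
lemma P3: "\<forall>c1\<in>A. \<forall>c2\<in>A. \<forall>p\<in>fst c1 \<inter> fst c2. \<forall>u v.
        gform (G c1 (snd c1 p)) u v =
        gform (G c2 (snd c2 p)) (frechet_derivative (transition c1 c2) (at (snd c1 p)) u)
                                (frechet_derivative (transition c1 c2) (at (snd c1 p)) v)"
  using T[unfolded time_oriented_lorentzian_def] by (elim conjE) assumption
lemma P4: "\<forall>c\<in>A. continuous_on (snd c ` fst c) (X c) \<and>
        (\<forall>a\<in>snd c ` fst c. gform (G c a) (X c a) (X c a) < 0)"
  using T[unfolded time_oriented_lorentzian_def] by (elim conjE) assumption
lemma P5: "\<forall>c1\<in>A. \<forall>c2\<in>A. \<forall>p\<in>fst c1 \<inter> fst c2.
        X c2 (snd c2 p) = frechet_derivative (transition c1 c2) (at (snd c1 p)) (X c1 (snd c1 p))"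
  using T[unfolded time_oriented_lorentzian_def] by (elim conjE) assumption

lemma A1: "\<forall>c\<in>A. is_chart c"
  using P1[unfolded smooth_atlas_def] by (elim conjE) assumption
lemma A2: "(\<Union>c\<in>A. fst c) = UNIV"
  using P1[unfolded smooth_atlas_def] by (elim conjE) assumption
lemma A3: "\<forall>c1\<in>A. \<forall>c2\<in>A. smooth_on_set (snd c1 ` (fst c1 \<inter> fst c2)) (transition c1 c2)"
  using P1[unfolded smooth_atlas_def] by (elim conjE) assumption

lemma chart:
  assumes "c \<in> A"
  shows "open (fst c)" "open (snd c ` fst c)"
    "homeomorphism (fst c) (snd c ` fst c) (snd c) (inv_into (fst c) (snd c))"
proof -
  obtain U \<phi> where c: "c = (U, \<phi>)" by (cases c)
  have "is_chart c" using A1 assms by blast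
  thus "open (fst c)" "open (snd c ` fst c)"
    "homeomorphism (fst c) (snd c ` fst c) (snd c) (inv_into (fst c) (snd c))"
    by (simp_all add: c is_chart_def)
qed

lemma chart_inv1: "c \<in> A \<Longrightarrow> q \<in> fst c \<Longrightarrow> inv_into (fst c) (snd c) (snd c q) = q"
  using chart(3) unfolding homeomorphism_def by blast

lemma chart_inv2: "c \<in> A \<Longrightarrow> y \<in> snd c ` fst c \<Longrightarrow> snd c (inv_into (fst c) (snd c) y) = y
    \<and> inv_into (fst c) (snd c) y \<in> fst c"
  using chart(3) unfolding homeomorphism_def by blast

lemma cover: "\<exists>c\<in>A. p \<in> fst c"
  using A2 by blast

lemma Gprops: assumes "c \<in> A"
  shows "continuous_on (snd c ` fst c) (G c)" "\<forall>y\<in>snd c ` fst c. lorentz_sig (G c y)"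
  using P2 assms smooth_cont by blast+

lemma Xprops: assumes "c \<in> A"
  shows "continuous_on (snd c ` fst c) (X c)" "\<forall>y\<in>snd c ` fst c. gform (G c y) (X c y) (X c y) < 0"
  using P4 assms by blast+

lemma tensor: "c1 \<in> A \<Longrightarrow> c2 \<in> A \<Longrightarrow> p \<in> fst c1 \<inter> fst c2 \<Longrightarrow>
        gform (G c1 (snd c1 p)) u v =
        gform (G c2 (snd c2 p)) (frechet_derivative (transition c1 c2) (at (snd c1 p)) u)
                                (frechet_derivative (transition c1 c2) (at (snd c1 p)) v)"
  using P3 by blast

lemma Xtrans: "c1 \<in> A \<Longrightarrow> c2 \<in> A \<Longrightarrow> p \<in> fst c1 \<inter> fst c2 \<Longrightarrow>
        X c2 (snd c2 p) = frechet_derivative (transition c1 c2) (at (snd c1 p)) (X c1 (snd c1 p))"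
  using P5 by blast

lemma overlap_open: assumes "c1 \<in> A" "c2 \<in> A" shows "open (snd c1 ` (fst c1 \<inter> fst c2))"
proof -
  have "openin (top_of_set (fst c1)) (fst c1 \<inter> fst c2)"
    using chart(1)[OF assms(2)] by (simp add: openin_open_Int)
  from homeomorphism_imp_open_map[OF chart(3)[OF assms(1)] this]
  have "openin (top_of_set (snd c1 ` fst c1)) (snd c1 ` (fst c1 \<inter> fst c2))" .
  thus ?thesis using chart(2)[OF assms(1)] openin_open_trans by blast
qed

lemma trans_smooth: "c1 \<in> A \<Longrightarrow> c2 \<in> A \<Longrightarrow> smooth_on_set (snd c1 ` (fst c1 \<inter> fst c2)) (transition c1 c2)"
  using A3 by blast

lemma trans_deriv:
  assumes "c1 \<in> A" "c2 \<in> A" "y \<in> snd c1 ` (fst c1 \<inter> fst c2)"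
  shows "(transition c1 c2 has_derivative frechet_derivative (transition c1 c2) (at y)) (at y)"
proof -
  have "transition c1 c2 differentiable (at y within snd c1 ` (fst c1 \<inter> fst c2))"
    using smooth_C1[OF trans_smooth[OF assms(1,2)]] assms(3) unfolding differentiable_on_def by blast
  hence "transition c1 c2 differentiable (at y)"
    using at_within_open[OF assms(3) overlap_open[OF assms(1,2)]] by simp
  thus ?thesis using frechet_derivative_works by blast
qed

lemma trans_lin:
  assumes "c1 \<in> A" "c2 \<in> A" "y \<in> snd c1 ` (fst c1 \<inter> fst c2)"
  shows "linear (frechet_derivative (transition c1 c2) (at y))"
  using trans_deriv[OF assms] has_derivative_linear by blast

lemma trans_Dcont:
  assumes c: "c1 \<in> A" "c2 \<in> A" and cg: "continuous_on T g" and gT: "g ` T \<subseteq> snd c1 ` (fst c1 \<inter> fst c2)"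
    and cu: "continuous_on T u"
  shows "continuous_on T (\<lambda>t. frechet_derivative (transition c1 c2) (at (g t)) (u t))"
proof -
  let ?D = "\<lambda>y. frechet_derivative (transition c1 c2) (at y)"
  have eq: "?D (g t) (u t) = (\<Sum>i\<in>UNIV. (u t $ i) *\<^sub>R ?D (g t) (axis i 1))" if "t \<in> T" for t
  proof -
    have lin: "linear (?D (g t))" using trans_lin[OF c] gT that by blast
    have "?D (g t) (u t) = ?D (g t) (\<Sum>i\<in>UNIV. (u t $ i) *\<^sub>R axis i 1)"
      using basis_expansion[of "u t"] by (simp add: scalar_mult_eq_scaleR)
    also have "\<dots> = (\<Sum>i\<in>UNIV. (u t $ i) *\<^sub>R ?D (g t) (axis i 1))"
      by (simp add: linear_sum[OF lin] linear_cmul[OF lin])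
    finally show ?thesis .
  qed
  have "continuous_on T (\<lambda>t. \<Sum>i\<in>UNIV. (u t $ i) *\<^sub>R ?D (g t) (axis i 1))"
  proof (intro continuous_on_sum continuous_on_scaleR)
    fix i
    show "continuous_on T (\<lambda>t. u t $ i)" by (intro continuous_intros cu)
    have "continuous_on (snd c1 ` (fst c1 \<inter> fst c2)) (\<lambda>y. ?D y (axis i 1))"
      using smooth_C1[OF trans_smooth[OF c]] by blast
    from continuous_on_compose2[OF this cg gT]
    show "continuous_on T (\<lambda>t. ?D (g t) (axis i 1))" .
  qed
  thus ?thesis by (rule continuous_on_eq) (simp add: eq)
qed


lemma ftc_chart:
  assumes "fut_timelike_curve A G X \<gamma> a b" "c \<in> A"
  shows "\<exists>\<gamma>'. continuous_on {t\<in>{0..1}. \<gamma> t \<in> fst c} \<gamma>' \<and>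
        (\<forall>t\<in>{t\<in>{0..1}. \<gamma> t \<in> fst c}.
           ((snd c \<circ> \<gamma>) has_vector_derivative \<gamma>' t) (at t within {t\<in>{0..1}. \<gamma> t \<in> fst c}) \<and>
           gform (G c (snd c (\<gamma> t))) (\<gamma>' t) (\<gamma>' t) < 0 \<and>
           gform (G c (snd c (\<gamma> t))) (\<gamma>' t) (X c (snd c (\<gamma> t))) < 0)"
proof -
  have "\<forall>c\<in>A. \<exists>\<gamma>'. continuous_on {t\<in>{0..1}. \<gamma> t \<in> fst c} \<gamma>' \<and>
        (\<forall>t\<in>{t\<in>{0..1}. \<gamma> t \<in> fst c}.
           ((snd c \<circ> \<gamma>) has_vector_derivative \<gamma>' t) (at t within {t\<in>{0..1}. \<gamma> t \<in> fst c}) \<and>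
           gform (G c (snd c (\<gamma> t))) (\<gamma>' t) (\<gamma>' t) < 0 \<and>
           gform (G c (snd c (\<gamma> t))) (\<gamma>' t) (X c (snd c (\<gamma> t))) < 0)"
    using assms(1)[unfolded fut_timelike_curve_def] by (elim conjE) assumption
  thus ?thesis using assms(2) by blast
qed

lemma ftc_basic:
  assumes "fut_timelike_curve A G X \<gamma> a b"
  shows "continuous_on {0..1} \<gamma>" "\<gamma> 0 = a" "\<gamma> 1 = b"
proof -
  have "continuous_on {0..1} \<gamma> \<and> \<gamma> 0 = a \<and> \<gamma> 1 = b"
    using assms[unfolded fut_timelike_curve_def] by (elim conjE) (intro conjI)
  thus "continuous_on {0..1} \<gamma>" "\<gamma> 0 = a" "\<gamma> 1 = b" by auto
qed

lemma glue_chart: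
  assumes c: "c \<in> A" and c': "c' \<in> A"
    and tt: "0 < \<tau>" "\<tau> < \<tau>0" "\<tau>0 < 1"
    and \<beta>: "fut_timelike_curve A G X \<beta> b x"
    and \<beta>V: "\<forall>s\<in>{0..\<tau>0}. \<beta> s \<in> fst c"
    and wcd: "\<forall>s\<in>{0..\<tau>0}. ((snd c \<circ> \<beta>) has_vector_derivative wc s) (at s within {t\<in>{0..1}. \<beta> t \<in> fst c})"
    and wcc: "continuous_on {0..\<tau>0} wc"
    and Gt: "Gt = (\<lambda>s. snd c (\<beta> s) - ((max 0 (1 - s/\<tau>))^2) *\<^sub>R e)"
    and Gtin: "\<forall>s\<in>{0..\<tau>}. Gt s \<in> snd c ` fst c"
    and cone: "\<forall>s\<in>{0..\<tau>}. tcone (G c (Gt s)) (X c (Gt s)) (wc s + (2 * max 0 (1 - s/\<tau>) / \<tau>) *\<^sub>R e)"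
    and \<Gamma>: "\<Gamma> = (\<lambda>s. if s \<le> \<tau> then inv_into (fst c) (snd c) (Gt s) else \<beta> s)"
    and \<Gamma>c: "continuous_on {0..1} \<Gamma>"
  shows "\<exists>\<gamma>'. continuous_on {t\<in>{0..1}. \<Gamma> t \<in> fst c'} \<gamma>' \<and>
        (\<forall>t\<in>{t\<in>{0..1}. \<Gamma> t \<in> fst c'}.
           ((snd c' \<circ> \<Gamma>) has_vector_derivative \<gamma>' t) (at t within {t\<in>{0..1}. \<Gamma> t \<in> fst c'}) \<and>
           gform (G c' (snd c' (\<Gamma> t))) (\<gamma>' t) (\<gamma>' t) < 0 \<and>
           gform (G c' (snd c' (\<Gamma> t))) (\<gamma>' t) (X c' (snd c' (\<Gamma> t))) < 0)"
proof -
  define \<psi> where "\<psi> = inv_into (fst c) (snd c)"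
  define S' where "S' = {t\<in>{0..1}. \<Gamma> t \<in> fst c'}"
  define Sb where "Sb = {t\<in>{0..1}. \<beta> t \<in> fst c'}"
  obtain wc' where wc'c: "continuous_on Sb wc'" and wc'd: "\<forall>t\<in>Sb.
           ((snd c' \<circ> \<beta>) has_vector_derivative wc' t) (at t within Sb) \<and>
           gform (G c' (snd c' (\<beta> t))) (wc' t) (wc' t) < 0 \<and>
           gform (G c' (snd c' (\<beta> t))) (wc' t) (X c' (snd c' (\<beta> t))) < 0"
    using ftc_chart[OF \<beta> c'] unfolding Sb_def by blast
  have \<Gamma>\<beta>: "\<Gamma> s = \<beta> s" if "s \<ge> \<tau>" for s
  proof (cases "s = \<tau>")
    case True
    have "Gt \<tau> = snd c (\<beta> \<tau>)" using tt by (simp add: Gt)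
    moreover have "\<beta> \<tau> \<in> fst c" using \<beta>V tt by auto
    ultimately show ?thesis using True chart_inv1[OF c] by (simp add: \<Gamma>)
  qed (use that in \<open>simp add: \<Gamma>\<close>)
  have f1: "\<psi> (Gt s) = \<Gamma> s \<and> \<Gamma> s \<in> fst c \<and> Gt s \<in> snd c ` fst c \<and> snd c (\<Gamma> s) = Gt s"
    if s: "s \<in> {0..\<tau>0}" for s
  proof (cases "s \<le> \<tau>")
    case True
    hence "Gt s \<in> snd c ` fst c" using Gtin s by auto
    thus ?thesis using chart_inv2[OF c] True by (simp add: \<Gamma> \<psi>_def)
  next
    case False
    have "max 0 (1 - s/\<tau>) = 0" using False tt by (simp add: field_simps)
    hence g: "Gt s = snd c (\<beta> s)" by (simp add: Gt)
    have b: "\<beta> s \<in> fst c" using \<beta>V s by auto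
    show ?thesis using False g b chart_inv1[OF c b] by (simp add: \<Gamma> \<psi>_def)
  qed
  have Seq: "S' \<inter> {\<tau>..} = Sb \<inter> {\<tau>..}" using \<Gamma>\<beta> by (auto simp: S'_def Sb_def)
  have S'open: "openin (top_of_set {0..1}) S'"
  proof -
    have "openin (top_of_set {0..1}) ({0..1} \<inter> \<Gamma> -` fst c')"
      by (rule continuous_openin_preimage[OF \<Gamma>c, where T=UNIV]) (use chart(1)[OF c'] in auto)
    moreover have "{0..1} \<inter> \<Gamma> -` fst c' = S'" by (auto simp: S'_def)
    ultimately show ?thesis by simp
  qed
  define Gt' where "Gt' s = wc s + (2 * max 0 (1 - s/\<tau>) / \<tau>) *\<^sub>R e" for s
  define Dt where "Dt y = frechet_derivative (transition c c') (at y)" for y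
  define F where "F s = Dt (Gt s) (Gt' s)" for s
  have sub0: "{0..\<tau>0} \<subseteq> {t\<in>{0..1}. \<beta> t \<in> fst c}" using \<beta>V tt by auto
  have GtD: "(Gt has_vector_derivative Gt' s) (at s within {0..\<tau>0})" if s: "s \<in> {0..\<tau>0}" for s
  proof -
    have d1: "((snd c \<circ> \<beta>) has_vector_derivative wc s) (at s within {0..\<tau>0})"
      using has_vector_derivative_within_subset[OF wcd[rule_format, OF s] sub0] .
    have d2: "((\<lambda>s. (max 0 (1 - s/\<tau>))^2) has_real_derivative (- 2 * max 0 (1 - s/\<tau>) / \<tau>)) (at s within {0..\<tau>0})"
      using H_deriv[OF tt(1)] by (rule has_field_derivative_at_within)
    have "((\<lambda>s. (snd c \<circ> \<beta>) s - (max 0 (1 - s/\<tau>))^2 *\<^sub>R e) has_vector_derivative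
         (wc s - ((max 0 (1 - s/\<tau>))^2 *\<^sub>R 0 + (- 2 * max 0 (1 - s/\<tau>) / \<tau>) *\<^sub>R e))) (at s within {0..\<tau>0})"
      by (intro has_vector_derivative_diff d1 has_vector_derivative_scaleR d2 has_vector_derivative_const)
    moreover have "wc s - ((max 0 (1 - s/\<tau>))^2 *\<^sub>R 0 + (- 2 * max 0 (1 - s/\<tau>) / \<tau>) *\<^sub>R e) = Gt' s"
      by (simp add: Gt'_def)
    ultimately show ?thesis by (simp add: Gt o_def)
  qed
  have Gtc: "continuous_on {0..\<tau>0} Gt"
  proof -
    have "continuous_on {0..\<tau>0} (\<lambda>s. snd c (\<beta> s))"
    proof (rule continuous_on_compose2[of "fst c" "snd c"])
      show "continuous_on (fst c) (snd c)" using chart(3)[OF c] homeomorphism_cont1 by blast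
      show "continuous_on {0..\<tau>0} \<beta>" using tt by (intro continuous_on_subset[OF ftc_basic(1)[OF \<beta>]]) auto
      show "\<beta> ` {0..\<tau>0} \<subseteq> fst c" using \<beta>V by auto
    qed
    thus ?thesis unfolding Gt using tt by (intro continuous_intros) auto
  qed
  have Gt'c: "continuous_on {0..\<tau>0} Gt'" unfolding Gt'_def using tt by (intro continuous_intros wcc) auto
  have f3: "Gt s \<in> snd c ` (fst c \<inter> fst c') \<and> snd c' (\<Gamma> s) = transition c c' (Gt s)"
    if "s \<in> S'" "s < \<tau>0" for s
  proof -
    have s0: "s \<in> {0..\<tau>0}" using that by (auto simp: S'_def)
    have "\<Gamma> s \<in> fst c'" using that by (auto simp: S'_def)
    moreover have "transition c c' (Gt s) = snd c' (\<Gamma> s)"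
      using f1[OF s0] by (simp add: transition_def \<psi>_def)
    ultimately show ?thesis using f1[OF s0] by (metis IntI image_eqI)
  qed
  have f7: "((snd c' \<circ> \<Gamma>) has_vector_derivative F t) (at t within S')" if t: "t \<in> S'" "t < \<tau>0" for t
  proof -
    have subT: "S' \<inter> {..<\<tau>0} \<subseteq> {0..\<tau>0}" by (auto simp: S'_def)
    have t0: "t \<in> {0..\<tau>0}" using t by (auto simp: S'_def)
    have d1: "(Gt has_derivative (\<lambda>h. h *\<^sub>R Gt' t)) (at t within S' \<inter> {..<\<tau>0})"
      using has_vector_derivative_within_subset[OF GtD[OF t0] subT] unfolding has_vector_derivative_def .
    have ov: "Gt t \<in> snd c ` (fst c \<inter> fst c')" using f3[OF t] by blast
    have d2: "(transition c c' has_derivative Dt (Gt t)) (at (Gt t))"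
      unfolding Dt_def by (rule trans_deriv[OF c c' ov])
    have lin: "linear (Dt (Gt t))" unfolding Dt_def by (rule trans_lin[OF c c' ov])
    have "((\<lambda>s. transition c c' (Gt s)) has_derivative (\<lambda>h. Dt (Gt t) (h *\<^sub>R Gt' t))) (at t within S' \<inter> {..<\<tau>0})"
      by (rule has_derivative_compose[OF d1 d2])
    moreover have "(\<lambda>h. Dt (Gt t) (h *\<^sub>R Gt' t)) = (\<lambda>h. h *\<^sub>R F t)"
      using linear_cmul[OF lin] by (auto simp: F_def)
    ultimately have "((\<lambda>s. transition c c' (Gt s)) has_vector_derivative F t) (at t within S' \<inter> {..<\<tau>0})"
      unfolding has_vector_derivative_def by simp
    hence "((snd c' \<circ> \<Gamma>) has_vector_derivative F t) (at t within S' \<inter> {..<\<tau>0})"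
      by (rule has_vector_derivative_transform_within[OF _ zero_less_one]) (use t f3 in auto)
    thus ?thesis by (rule vd_localize) (use t in auto)
  qed
  have f8: "((snd c' \<circ> \<Gamma>) has_vector_derivative wc' t) (at t within S')" if t: "t \<in> S'" "t > \<tau>" for t
  proof -
    have gb: "\<Gamma> t = \<beta> t" using \<Gamma>\<beta> t(2) by simp
    have tb: "t \<in> Sb" using t(1) gb unfolding S'_def Sb_def by simp
    have "((snd c' \<circ> \<beta>) has_vector_derivative wc' t) (at t within Sb)" using wc'd tb by blast
    hence "((snd c' \<circ> \<beta>) has_vector_derivative wc' t) (at t within Sb \<inter> {\<tau><..})"
      by (rule has_vector_derivative_within_subset) blast
    moreover have "Sb \<inter> {\<tau><..} = S' \<inter> {\<tau><..}"
    proof -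
      have "Sb \<inter> {\<tau><..} = (Sb \<inter> {\<tau>..}) \<inter> {\<tau><..}" by auto
      also have "\<dots> = (S' \<inter> {\<tau>..}) \<inter> {\<tau><..}" by (simp only: Seq)
      also have "\<dots> = S' \<inter> {\<tau><..}" by auto
      finally show ?thesis .
    qed
    ultimately have "((snd c' \<circ> \<beta>) has_vector_derivative wc' t) (at t within S' \<inter> {\<tau><..})" by simp
    hence "((snd c' \<circ> \<Gamma>) has_vector_derivative wc' t) (at t within S' \<inter> {\<tau><..})"
    proof (rule has_vector_derivative_transform_within[OF _ zero_less_one])
      show "t \<in> S' \<inter> {\<tau><..}" using t by simp
      fix x' assume "x' \<in> S' \<inter> {\<tau><..}"
      hence "\<Gamma> x' = \<beta> x'" using \<Gamma>\<beta> by simp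
      thus "(snd c' \<circ> \<beta>) x' = (snd c' \<circ> \<Gamma>) x'" by simp
    qed
    thus ?thesis by (rule vd_localize) (use t in simp_all)
  qed
  have f9: "F t = wc' t" if t: "t \<in> S'" "\<tau> \<le> t" "t < \<tau>0" for t
  proof -
    have dA: "((snd c' \<circ> \<Gamma>) has_vector_derivative F t) (at t within S' \<inter> {t..})"
      by (rule has_vector_derivative_within_subset[OF f7[OF t(1,3)]]) blast
    have gb: "\<Gamma> t = \<beta> t" using \<Gamma>\<beta> t(2) by simp
    have tb: "t \<in> Sb" using t(1) gb unfolding S'_def Sb_def by simp
    have sub: "S' \<inter> {t..} \<subseteq> Sb"
    proof
      fix x' assume x': "x' \<in> S' \<inter> {t..}"
      hence "x' \<in> S' \<inter> {\<tau>..}" using t(2) by auto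
      hence "x' \<in> Sb \<inter> {\<tau>..}" by (simp only: Seq)
      thus "x' \<in> Sb" by blast
    qed
    have "((snd c' \<circ> \<beta>) has_vector_derivative wc' t) (at t within Sb)" using wc'd tb by blast
    hence "((snd c' \<circ> \<beta>) has_vector_derivative wc' t) (at t within S' \<inter> {t..})"
      by (rule has_vector_derivative_within_subset[OF _ sub])
    hence dB: "((snd c' \<circ> \<Gamma>) has_vector_derivative wc' t) (at t within S' \<inter> {t..})"
    proof (rule has_vector_derivative_transform_within[OF _ zero_less_one])
      show "t \<in> S' \<inter> {t..}" using t by simp
      fix x' assume "x' \<in> S' \<inter> {t..}"
      hence "\<Gamma> x' = \<beta> x'" using \<Gamma>\<beta> t(2) by simp
      thus "(snd c' \<circ> \<beta>) x' = (snd c' \<circ> \<Gamma>) x'" by simp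
    qed
    have t1: "t < 1" using t tt by simp
    show ?thesis
      by (rule vector_derivative_unique_within[OF nontriv[OF S'open t(1) t1] dA dB])
  qed
  define \<gamma>' where "\<gamma>' s = (if s \<le> \<tau> then F s else wc' s)" for s
  have cont: "continuous_on S' \<gamma>'"
  proof (rule cont_local)
    fix x assume x: "x \<in> S'"
    show "\<exists>T. open T \<and> x \<in> T \<and> continuous_on (S' \<inter> T) \<gamma>'"
    proof (cases "x < \<tau>0")
      case True
      have sub: "S' \<inter> {..<\<tau>0} \<subseteq> {0..\<tau>0}" unfolding S'_def by auto
      have img: "Gt ` (S' \<inter> {..<\<tau>0}) \<subseteq> snd c ` (fst c \<inter> fst c')"
      proof
        fix y assume "y \<in> Gt ` (S' \<inter> {..<\<tau>0})"
        then obtain s where s: "s \<in> S'" "s < \<tau>0" "y = Gt s" by blast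
        show "y \<in> snd c ` (fst c \<inter> fst c')" using f3[OF s(1,2)] s(3) by simp
      qed
      have "continuous_on (S' \<inter> {..<\<tau>0}) F" unfolding F_def Dt_def
        by (rule trans_Dcont[OF c c' continuous_on_subset[OF Gtc sub] img continuous_on_subset[OF Gt'c sub]])
      hence "continuous_on (S' \<inter> {..<\<tau>0}) \<gamma>'"
      proof (rule continuous_on_eq)
        fix s assume s: "s \<in> S' \<inter> {..<\<tau>0}"
        show "F s = \<gamma>' s"
        proof (cases "s \<le> \<tau>")
          case True thus ?thesis by (simp add: \<gamma>'_def)
        next
          case False
          hence "F s = wc' s" using f9[of s] s by simp
          thus ?thesis using False by (simp add: \<gamma>'_def)
        qed
      qed
      moreover have "open {..<\<tau>0}" "x \<in> {..<\<tau>0}" using True by simp_all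
      ultimately show ?thesis by blast
    next
      case False
      have sub: "S' \<inter> {\<tau><..} \<subseteq> Sb"
      proof
        fix x' assume x': "x' \<in> S' \<inter> {\<tau><..}"
        hence "x' \<in> S' \<inter> {\<tau>..}" by auto
        hence "x' \<in> Sb \<inter> {\<tau>..}" by (simp only: Seq)
        thus "x' \<in> Sb" by blast
      qed
      have "continuous_on (S' \<inter> {\<tau><..}) wc'" by (rule continuous_on_subset[OF wc'c sub])
      hence "continuous_on (S' \<inter> {\<tau><..}) \<gamma>'"
        by (rule continuous_on_eq) (simp add: \<gamma>'_def)
      moreover have "open {\<tau><..}" "x \<in> {\<tau><..}" using False tt by simp_all
      ultimately show ?thesis by blast
    qed
  qed
  have pt: "((snd c' \<circ> \<Gamma>) has_vector_derivative \<gamma>' t) (at t within S') \<and>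
           gform (G c' (snd c' (\<Gamma> t))) (\<gamma>' t) (\<gamma>' t) < 0 \<and>
           gform (G c' (snd c' (\<Gamma> t))) (\<gamma>' t) (X c' (snd c' (\<Gamma> t))) < 0" if t: "t \<in> S'" for t
  proof (cases "t \<le> \<tau>")
    case True
    have t0: "t \<in> {0..\<tau>0}" "t \<in> {0..\<tau>}" using t True tt unfolding S'_def by auto
    have ff: "\<Gamma> t \<in> fst c" "snd c (\<Gamma> t) = Gt t" using f1[OF t0(1)] by blast+
    have p: "\<Gamma> t \<in> fst c \<inter> fst c'" using ff(1) t unfolding S'_def by blast
    have tc: "tcone (G c (Gt t)) (X c (Gt t)) (Gt' t)" using cone t0(2) unfolding Gt'_def by blast
    have e1: "gform (G c' (snd c' (\<Gamma> t))) (F t) (F t) = gform (G c (Gt t)) (Gt' t) (Gt' t)"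
      using tensor[OF c c' p, of "Gt' t" "Gt' t"] unfolding ff(2) F_def Dt_def by simp
    have e2: "gform (G c' (snd c' (\<Gamma> t))) (F t) (X c' (snd c' (\<Gamma> t))) = gform (G c (Gt t)) (Gt' t) (X c (Gt t))"
      using tensor[OF c c' p, of "Gt' t" "X c (Gt t)"] Xtrans[OF c c' p] unfolding ff(2) F_def Dt_def by simp
    have tl: "t < \<tau>0" using True tt by simp
    have g: "\<gamma>' t = F t" using True by (simp add: \<gamma>'_def)
    show ?thesis using f7[OF t tl] e1 e2 tc unfolding g tcone_def by simp
  next
    case False
    have gb: "\<Gamma> t = \<beta> t" using \<Gamma>\<beta> False by simp
    have tb: "t \<in> Sb" using t gb unfolding S'_def Sb_def by simp
    have g: "\<gamma>' t = wc' t" using False by (simp add: \<gamma>'_def)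
    have "gform (G c' (snd c' (\<beta> t))) (wc' t) (wc' t) < 0 \<and>
           gform (G c' (snd c' (\<beta> t))) (wc' t) (X c' (snd c' (\<beta> t))) < 0" using wc'd tb by blast
    thus ?thesis using f8[OF t] False unfolding g gb by simp
  qed
  have "continuous_on {t\<in>{0..1}. \<Gamma> t \<in> fst c'} \<gamma>'" using cont unfolding S'_def .
  moreover have "\<forall>t\<in>{t\<in>{0..1}. \<Gamma> t \<in> fst c'}.
           ((snd c' \<circ> \<Gamma>) has_vector_derivative \<gamma>' t) (at t within {t\<in>{0..1}. \<Gamma> t \<in> fst c'}) \<and>
           gform (G c' (snd c' (\<Gamma> t))) (\<gamma>' t) (\<gamma>' t) < 0 \<and>
           gform (G c' (snd c' (\<Gamma> t))) (\<gamma>' t) (X c' (snd c' (\<Gamma> t))) < 0"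
    using pt unfolding S'_def by blast
  ultimately show ?thesis by blast
qed


lemma MAIN:
  assumes U: "open U" "p \<in> U" "U \<subseteq> closure (Ipast A G X x)"
  shows "chron A G X p x"
proof -
  obtain c where c: "c \<in> A" "p \<in> fst c" using cover by blast
  define \<phi> where "\<phi> = snd c"
  define \<psi> where "\<psi> = inv_into (fst c) (snd c)"
  define Om where "Om = snd c ` fst c"
  define a where "a = snd c p"
  have aO: "a \<in> Om" using c by (simp add: a_def Om_def)
  have oOm: "open Om" using chart(2)[OF c(1)] by (simp add: Om_def)
  have hom: "homeomorphism (fst c) Om (snd c) \<psi>" using chart(3)[OF c(1)] by (simp add: Om_def \<psi>_def)
  have cG: "continuous_on Om (G c)" using Gprops(1)[OF c(1)] by (simp add: Om_def)
  have cX: "continuous_on Om (X c)" using Xprops(1)[OF c(1)] by (simp add: Om_def)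
  have LX: "\<forall>y\<in>Om. lorentz_sig (G c y) \<and> gform (G c y) (X c y) (X c y) < 0"
    using Gprops(2)[OF c(1)] Xprops(2)[OF c(1)] by (simp add: Om_def)
  define e0 where "e0 = X c a"
  have te0: "tcone (G c a) (X c a) e0" using LX aO by (simp add: tcone_def e0_def)
  obtain \<epsilon> where eps: "\<epsilon> > 0" "cball a \<epsilon> \<subseteq> Om"
    and stab: "\<forall>y u. dist y a < \<epsilon> \<longrightarrow> dist u e0 < \<epsilon> \<longrightarrow> tcone (G c y) (X c y) u"
    using STAB[OF oOm aO cG cX te0] by blast
  define Om' where "Om' = snd c ` (U \<inter> fst c)"
  have oOm': "open Om'"
  proof -
    have "openin (top_of_set (fst c)) (U \<inter> fst c)" using U(1) by (metis Int_commute openin_open_Int)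
    from homeomorphism_imp_open_map[OF hom this]
    have "openin (top_of_set Om) Om'" by (simp add: Om'_def)
    thus ?thesis using oOm openin_open_trans by blast
  qed
  have aO': "a \<in> Om'" using c U by (simp add: a_def Om'_def)
  obtain r1 where r1: "r1 > 0" "ball a r1 \<subseteq> Om'" using oOm' aO' open_contains_ball by blast
  define \<mu> where "\<mu> = min r1 (\<epsilon>/2)"
  have \<mu>: "\<mu> > 0" using r1 eps by (simp add: \<mu>_def)
  define \<delta> where "\<delta> = \<mu> / (2 * (norm e0 + \<epsilon>))"
  have ne: "norm e0 + \<epsilon> > 0" using eps by (simp add: add_nonneg_pos)
  have \<delta>: "\<delta> > 0" using \<mu> ne by (simp add: \<delta>_def)
  have "\<delta> * (norm e0 + \<epsilon>) = \<mu> / 2" unfolding \<delta>_def using ne by (simp add: field_simps)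
  hence \<delta>2: "\<delta> * (norm e0 + \<epsilon>) < \<mu>" using \<mu> by simp
  define Bset where "Bset = ball (a + \<delta> *\<^sub>R e0) (\<delta> * \<epsilon> / 2)"
  have Bnear: "norm (b' - a) < \<mu>" if "b' \<in> Bset" for b'
  proof -
    have "b' - a = (b' - (a + \<delta> *\<^sub>R e0)) + \<delta> *\<^sub>R e0" by simp
    hence "norm (b' - a) \<le> norm (b' - (a + \<delta> *\<^sub>R e0)) + norm (\<delta> *\<^sub>R e0)" by (metis norm_triangle_ineq)
    also have "\<dots> < \<delta> * \<epsilon> / 2 + \<delta> * norm e0"
      using that \<delta> by (simp add: Bset_def dist_norm norm_minus_commute)
    also have "\<dots> \<le> \<delta> * (norm e0 + \<epsilon>)" using \<delta> eps by (simp add: algebra_simps)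
    finally show ?thesis using \<delta>2 by simp
  qed
  have BO': "Bset \<subseteq> Om'"
  proof
    fix b' assume "b' \<in> Bset"
    hence "norm (b' - a) < r1" using Bnear[of b'] by (simp add: \<mu>_def)
    thus "b' \<in> Om'" using r1 by (auto simp: dist_norm norm_minus_commute)
  qed
  have BO: "Bset \<subseteq> Om" using BO' by (auto simp: Om'_def Om_def)
  define W where "W = \<psi> ` Bset"
  have oW: "open W"
  proof -
    have "openin (top_of_set Om) Bset" using BO by (rule open_subset) (simp add: Bset_def)
    from homeomorphism_imp_open_map[OF homeomorphism_symD[OF hom] this]
    have "openin (top_of_set (fst c)) W" by (simp add: W_def)
    thus ?thesis using chart(1)[OF c(1)] openin_open_trans by blast
  qed
  have WU: "W \<subseteq> U"
  proof
    fix q assume "q \<in> W"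
    then obtain b' where b': "b' \<in> Bset" "q = \<psi> b'" by (auto simp: W_def)
    then obtain q' where q': "q' \<in> U \<inter> fst c" "b' = snd c q'" using BO' by (auto simp: Om'_def)
    have "\<psi> b' = q'" using chart_inv1[OF c(1), of q'] q' by (simp add: \<psi>_def)
    thus "q \<in> U" using b' q' by simp
  qed
  have Wne: "W \<noteq> {}"
  proof -
    have "a + \<delta> *\<^sub>R e0 \<in> Bset" using \<delta> eps by (simp add: Bset_def)
    thus ?thesis by (auto simp: W_def)
  qed
  have "W \<inter> closure (Ipast A G X x) \<noteq> {}" using WU U(3) Wne by blast
  hence "W \<inter> Ipast A G X x \<noteq> {}" using open_Int_closure_eq_empty[OF oW] by blast
  then obtain b' where b': "b' \<in> Bset" "chron A G X (\<psi> b') x" by (auto simp: W_def Ipast_def)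
  then obtain \<beta> where \<beta>: "fut_timelike_curve A G X \<beta> (\<psi> b') x" by (auto simp: chron_def)
  have bO: "b' \<in> Om" using b' BO by blast
  have \<psi>b: "snd c (\<psi> b') = b'" "\<psi> b' \<in> fst c" using chart_inv2[OF c(1)] bO by (auto simp: \<psi>_def Om_def)
  define e where "e = b' - a"
  have ae: "a + e = b'" by (simp add: e_def)
  have ne_: "norm e < \<epsilon>/2" using Bnear[OF b'(1)] by (simp add: e_def \<mu>_def)
  have de: "dist ((1/\<delta>) *\<^sub>R e) e0 < \<epsilon>/2"
  proof -
    have "(1/\<delta>) *\<^sub>R e - e0 = (1/\<delta>) *\<^sub>R (b' - (a + \<delta> *\<^sub>R e0))" using \<delta> by (simp add: e_def algebra_simps)
    hence "dist ((1/\<delta>) *\<^sub>R e) e0 = (1/\<delta>) * dist b' (a + \<delta> *\<^sub>R e0)" using \<delta> by (simp add: dist_norm)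
    also have "\<dots> < (1/\<delta>) * (\<delta> * \<epsilon> / 2)"
    proof (rule mult_strict_left_mono)
      show "dist b' (a + \<delta> *\<^sub>R e0) < \<delta> * \<epsilon> / 2" using b'(1) by (simp add: Bset_def dist_commute)
    qed (use \<delta> in simp)
    also have "\<dots> = \<epsilon>/2" using \<delta> by simp
    finally show ?thesis .
  qed
  have \<beta>b: "continuous_on {0..1} \<beta>" "\<beta> 0 = \<psi> b'" "\<beta> 1 = x" using ftc_basic[OF \<beta>] by auto
  define Sc where "Sc = {t\<in>{0..1}. \<beta> t \<in> fst c}"
  obtain wc where wcc: "continuous_on Sc wc" and wcd: "\<forall>t\<in>Sc.
           ((snd c \<circ> \<beta>) has_vector_derivative wc t) (at t within Sc) \<and>
           gform (G c (snd c (\<beta> t))) (wc t) (wc t) < 0 \<and>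
           gform (G c (snd c (\<beta> t))) (wc t) (X c (snd c (\<beta> t))) < 0"
    using ftc_chart[OF \<beta> c(1)] unfolding Sc_def by blast
  have cphi: "continuous_on (fst c) (snd c)" using hom homeomorphism_cont1 by blast
  have Scopen: "openin (top_of_set {0..1}) Sc"
  proof -
    have "openin (top_of_set {0..1}) ({0..1} \<inter> \<beta> -` fst c)"
      by (rule continuous_openin_preimage[OF \<beta>b(1), where T=UNIV]) (use chart(1)[OF c(1)] in auto)
    moreover have "{0..1} \<inter> \<beta> -` fst c = Sc" by (auto simp: Sc_def)
    ultimately show ?thesis by simp
  qed
  have cpb: "continuous_on Sc (\<lambda>s. snd c (\<beta> s))"
    by (rule continuous_on_compose2[OF cphi continuous_on_subset[OF \<beta>b(1)]]) (auto simp: Sc_def)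
  define Z where "Z = Sc \<inter> (\<lambda>s. snd c (\<beta> s)) -` ball b' (\<epsilon>/2)"
  have "openin (top_of_set Sc) Z"
    unfolding Z_def by (rule continuous_openin_preimage[OF cpb, where T=UNIV]) auto
  hence Zo: "openin (top_of_set {0..1}) Z" using Scopen openin_trans by blast
  have Z0: "0 \<in> Z" using \<beta>b \<psi>b eps by (simp add: Z_def Sc_def)
  obtain d where d: "d > 0" "ball 0 d \<inter> {0..1} \<subseteq> Z" using Zo Z0 unfolding openin_contains_ball by blast
  define \<tau>0 where "\<tau>0 = min (d/2) (1/2)"
  have t0: "\<tau>0 > 0" "\<tau>0 < 1" using d by (auto simp: \<tau>0_def)
  have inZ: "s \<in> Z" if "s \<in> {0..\<tau>0}" for s
  proof -
    have "s \<in> ball 0 d \<inter> {0..1}" using that d by (auto simp: \<tau>0_def dist_real_def)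
    thus ?thesis using d by blast
  qed
  have \<beta>V: "\<forall>s\<in>{0..\<tau>0}. \<beta> s \<in> fst c" using inZ by (auto simp: Z_def Sc_def)
  have near: "\<forall>s\<in>{0..\<tau>0}. dist (snd c (\<beta> s)) (a + e) < \<epsilon>/2"
    using inZ by (auto simp: Z_def ae dist_commute)
  have sub0: "{0..\<tau>0} \<subseteq> Sc" using inZ by (auto simp: Z_def)
  have cb: "continuous_on {0..\<tau>0} (\<lambda>s. snd c (\<beta> s))" by (rule continuous_on_subset[OF cpb sub0])
  have cw: "continuous_on {0..\<tau>0} wc" by (rule continuous_on_subset[OF wcc sub0])
  have tw: "\<forall>s\<in>{0..\<tau>0}. tcone (G c (snd c (\<beta> s))) (X c (snd c (\<beta> s))) (wc s)"
    using wcd sub0 by (auto simp: tcone_def)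
  obtain \<tau> where \<tau>: "0 < \<tau>" "\<tau> < \<tau>0" and cur: "\<forall>s\<in>{0..\<tau>}. dist (snd c (\<beta> s) - ((1 - s/\<tau>)^2) *\<^sub>R e) a < \<epsilon> \<and>
          tcone (G c (snd c (\<beta> s) - ((1 - s/\<tau>)^2) *\<^sub>R e)) (X c (snd c (\<beta> s) - ((1 - s/\<tau>)^2) *\<^sub>R e))
             (wc s + (2 * (1 - s/\<tau>) / \<tau>) *\<^sub>R e)"
    using CURVE[OF LX cG cX eps stab \<delta> de ne_ t0(1) cb cw near tw] by blast
  define Gt where "Gt = (\<lambda>s. snd c (\<beta> s) - ((max 0 (1 - s/\<tau>))^2) *\<^sub>R e)"
  have mx: "max 0 (1 - s/\<tau>) = 1 - s/\<tau>" if "s \<in> {0..\<tau>}" for s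
    using that \<tau> by (simp add: field_simps)
  have Gtin: "\<forall>s\<in>{0..\<tau>}. Gt s \<in> snd c ` fst c"
  proof
    fix s assume s: "s \<in> {0..\<tau>}"
    have "dist (Gt s) a < \<epsilon>" using cur s mx[OF s] by (simp add: Gt_def)
    hence "Gt s \<in> cball a \<epsilon>" by (simp add: dist_commute)
    thus "Gt s \<in> snd c ` fst c" using eps by (auto simp: Om_def)
  qed
  have cone: "\<forall>s\<in>{0..\<tau>}. tcone (G c (Gt s)) (X c (Gt s)) (wc s + (2 * max 0 (1 - s/\<tau>) / \<tau>) *\<^sub>R e)"
    using cur mx by (simp add: Gt_def)
  define \<Gamma> where "\<Gamma> = (\<lambda>s. if s \<le> \<tau> then inv_into (fst c) (snd c) (Gt s) else \<beta> s)"
  have \<Gamma>c: "continuous_on {0..1} \<Gamma>"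
  proof -
    have cGt: "continuous_on {0..\<tau>} Gt"
      unfolding Gt_def using \<tau>
      by (intro continuous_intros continuous_on_subset[OF cb]) auto
    have c\<psi>: "continuous_on Om \<psi>" using hom homeomorphism_cont2 by blast
    have c1: "continuous_on {0..\<tau>} (\<lambda>s. inv_into (fst c) (snd c) (Gt s))"
      using continuous_on_compose2[OF c\<psi> cGt] Gtin by (auto simp: \<psi>_def Om_def)
    have c2: "continuous_on {\<tau>..1} \<beta>" by (rule continuous_on_subset[OF \<beta>b(1)]) (use \<tau> in auto)
    have eqt: "inv_into (fst c) (snd c) (Gt \<tau>) = \<beta> \<tau>"
    proof -
      have "Gt \<tau> = snd c (\<beta> \<tau>)" using \<tau> by (simp add: Gt_def)
      moreover have "\<beta> \<tau> \<in> fst c" using \<beta>V \<tau> by auto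
      ultimately show ?thesis using chart_inv1[OF c(1)] by simp
    qed
    have "continuous_on ({0..\<tau>} \<union> {\<tau>..1}) (\<lambda>s. if s \<le> \<tau> then inv_into (fst c) (snd c) (Gt s) else \<beta> s)"
      by (rule continuous_on_cases[OF _ _ c1 c2]) (use eqt in auto)
    moreover have "{0..\<tau>} \<union> {\<tau>..1} = {0..(1::real)}" using \<tau> t0 by auto
    ultimately show ?thesis by (simp add: \<Gamma>_def)
  qed
  have \<Gamma>0: "\<Gamma> 0 = p"
  proof -
    have "Gt 0 = a" using \<beta>b \<psi>b \<tau> by (simp add: Gt_def e_def)
    thus ?thesis using \<tau> chart_inv1[OF c] by (simp add: \<Gamma>_def a_def)
  qed
  have \<Gamma>1: "\<Gamma> 1 = x" using \<tau> t0 \<beta>b by (simp add: \<Gamma>_def)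
  have wcd': "\<forall>s\<in>{0..\<tau>0}. ((snd c \<circ> \<beta>) has_vector_derivative wc s) (at s within {t\<in>{0..1}. \<beta> t \<in> fst c})"
    using wcd sub0 unfolding Sc_def by blast
  have tt: "0 < \<tau>" "\<tau> < \<tau>0" "\<tau>0 < 1" using \<tau> t0 by auto
  have "\<forall>c'\<in>A. \<exists>\<gamma>'. continuous_on {t\<in>{0..1}. \<Gamma> t \<in> fst c'} \<gamma>' \<and>
        (\<forall>t\<in>{t\<in>{0..1}. \<Gamma> t \<in> fst c'}.
           ((snd c' \<circ> \<Gamma>) has_vector_derivative \<gamma>' t) (at t within {t\<in>{0..1}. \<Gamma> t \<in> fst c'}) \<and>
           gform (G c' (snd c' (\<Gamma> t))) (\<gamma>' t) (\<gamma>' t) < 0 \<and>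
           gform (G c' (snd c' (\<Gamma> t))) (\<gamma>' t) (X c' (snd c' (\<Gamma> t))) < 0)"
  proof
    fix c' assume c': "c' \<in> A"
    show "\<exists>\<gamma>'. continuous_on {t\<in>{0..1}. \<Gamma> t \<in> fst c'} \<gamma>' \<and>
        (\<forall>t\<in>{t\<in>{0..1}. \<Gamma> t \<in> fst c'}.
           ((snd c' \<circ> \<Gamma>) has_vector_derivative \<gamma>' t) (at t within {t\<in>{0..1}. \<Gamma> t \<in> fst c'}) \<and>
           gform (G c' (snd c' (\<Gamma> t))) (\<gamma>' t) (\<gamma>' t) < 0 \<and>
           gform (G c' (snd c' (\<Gamma> t))) (\<gamma>' t) (X c' (snd c' (\<Gamma> t))) < 0)"
      by (rule glue_chart[OF c(1) c' tt \<beta> \<beta>V wcd' cw Gt_def Gtin cone \<Gamma>_def \<Gamma>c])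
  qed
  hence "fut_timelike_curve A G X \<Gamma> p x"
    unfolding fut_timelike_curve_def using \<Gamma>c \<Gamma>0 \<Gamma>1 by (intro conjI)
  thus ?thesis unfolding chron_def by blast
qed

end

lemma tol_neg:
  assumes T: "time_oriented_lorentzian A G X"
  shows "time_oriented_lorentzian A G (\<lambda>c y. - X c y)"
proof -
  interpret tol A G X by (rule tol.intro[OF T])
  have "\<forall>c1\<in>A. \<forall>c2\<in>A. \<forall>p\<in>fst c1 \<inter> fst c2.
        - X c2 (snd c2 p) = frechet_derivative (transition c1 c2) (at (snd c1 p)) (- X c1 (snd c1 p))"
  proof (intro ballI)
    fix c1 c2 p assume c: "c1 \<in> A" "c2 \<in> A" and p: "p \<in> fst c1 \<inter> fst c2"
    have lin: "linear (frechet_derivative (transition c1 c2) (at (snd c1 p)))"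
      by (rule trans_lin[OF c]) (use p in blast)
    show "- X c2 (snd c2 p) = frechet_derivative (transition c1 c2) (at (snd c1 p)) (- X c1 (snd c1 p))"
      using Xtrans[OF c p] linear_neg[OF lin] by simp
  qed
  moreover have "\<forall>c\<in>A. continuous_on (snd c ` fst c) (\<lambda>y. - X c y) \<and>
        (\<forall>a\<in>snd c ` fst c. gform (G c a) (- X c a) (- X c a) < 0)"
    using Xprops by (auto intro!: continuous_intros simp: gform_lin)
  ultimately show ?thesis using P1 P2 P3 unfolding time_oriented_lorentzian_def by blast
qed

lemma part1:
  fixes A :: "('m::topological_space, 'n::finite) chart set"
  assumes T: "time_oriented_lorentzian A G X"
  shows "(\<exists>y\<in>down_set A G X (Ifut A G X x). y \<notin> Ipast A G X x) \<longrightarrow>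
            (\<exists>z\<in>down_set A G X (Ifut A G X x). z \<notin> closure (Ipast A G X x))"
proof (intro impI, rule ccontr)
  interpret tol A G X by (rule tol.intro[OF T])
  assume "\<exists>y\<in>down_set A G X (Ifut A G X x). y \<notin> Ipast A G X x"
  then obtain y where y: "y \<in> down_set A G X (Ifut A G X x)" "y \<notin> Ipast A G X x" by blast
  assume "\<not> (\<exists>z\<in>down_set A G X (Ifut A G X x). z \<notin> closure (Ipast A G X x))"
  hence sub: "down_set A G X (Ifut A G X x) \<subseteq> closure (Ipast A G X x)" by blast
  have "open (down_set A G X (Ifut A G X x))" by (simp add: down_set_def)
  from MAIN[OF this y(1) sub] have "y \<in> Ipast A G X x" by (simp add: Ipast_def)
  with y(2) show False by simp
qed

lemma claim2_gen:
  fixes A :: "('m::topological_space, 'n::finite) chart set"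
    and G :: "('m, 'n) chart \<Rightarrow> real^'n \<Rightarrow> real^'n^'n"
    and X :: "('m, 'n) chart \<Rightarrow> real^'n \<Rightarrow> real^'n"
  assumes T: "time_oriented_lorentzian A G X"
  shows "((\<exists>y\<in>down_set A G X (Ifut A G X x). y \<notin> Ipast A G X x) \<longrightarrow>
            (\<exists>z\<in>down_set A G X (Ifut A G X x). z \<notin> closure (Ipast A G X x)))
       \<and> (up_set A G X (Ipast A G X x) - Ifut A G X x \<noteq> {} \<longrightarrow>
            (\<exists>z\<in>up_set A G X (Ipast A G X x). z \<notin> closure (Ifut A G X x)))"
proof
  show "(\<exists>y\<in>down_set A G X (Ifut A G X x). y \<notin> Ipast A G X x) \<longrightarrow>
            (\<exists>z\<in>down_set A G X (Ifut A G X x). z \<notin> closure (Ipast A G X x))"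
    by (rule part1[OF T])
next
  define X' where "X' = (\<lambda>c y. - X c y)"
  have T': "time_oriented_lorentzian A G X'" unfolding X'_def by (rule tol_neg[OF T])
  have e1: "Ifut A G X' x = Ipast A G X x"
    by (simp add: Ifut_def Ipast_def X'_def chron_neg)
  have e2: "Ipast A G X' x = Ifut A G X x"
    by (simp add: Ifut_def Ipast_def X'_def chron_neg)
  have e3: "down_set A G X' (Ifut A G X' x) = up_set A G X (Ipast A G X x)"
    unfolding e1 by (simp add: down_set_def up_set_def X'_def chron_neg)
  show "up_set A G X (Ipast A G X x) - Ifut A G X x \<noteq> {} \<longrightarrow>
            (\<exists>z\<in>up_set A G X (Ipast A G X x). z \<notin> closure (Ifut A G X x))"
    using part1[OF T', of x] unfolding e2 e3 by blast
qed

theorem claim2: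
  fixes A :: "('m::{t2_space, second_countable_topology}, 'n::finite) chart set"
    and G :: "('m, 'n) chart \<Rightarrow> real^'n \<Rightarrow> real^'n^'n"
    and X :: "('m, 'n) chart \<Rightarrow> real^'n \<Rightarrow> real^'n"
    and x :: 'm
  assumes "time_oriented_lorentzian A G X"
  shows "((\<exists>y\<in>down_set A G X (Ifut A G X x). y \<notin> Ipast A G X x) \<longrightarrow>
            (\<exists>z\<in>down_set A G X (Ifut A G X x). z \<notin> closure (Ipast A G X x)))
       \<and> (up_set A G X (Ipast A G X x) - Ifut A G X x \<noteq> {} \<longrightarrow>
            (\<exists>z\<in>up_set A G X (Ipast A G X x). z \<notin> closure (Ifut A G X x)))"
  by (rule claim2_gen[OF assms])

end
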